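(* Let $R$ be a finite local Frobenius ring with a fixed primitive additive character $\psi$, and let $\tau$ be a non-primitive multiplicative character of $R$. (i) If $\chi$ is a primitive multiplicative character of $R$, then $\sum_{a\in R^\times}\chi(a)K_\tau(a)^2=J(\chi,\chi\tau^2)\,G(\chi\tau)^2$. (ii) If $R$ is not a field and has odd characteristic, and $\chi$ is a non-primitive multiplicative character of $R$, then $$\sum_{a\in R^\times}\chi(a)K_\tau(a)^2=\begin{cases}\tau(-1)\,|R^\times|\,|R| &\text{if }\chi=\overline{\tau}\text{ or }\chi=\sigma\overline{\tau},\\ 0&\text{otherwise.}\end{cases}$$
   Context: All rings are finite and commutative with identity; $R^\times$ is the unit group; $M$ is the maximal ideal. An additive character $(R,+)\to\mathbb{C}^*$ is primitive if the only ideal on which it is identically $1$ is $(0)$; $R$ is Frobenius if such a character exists. A multiplicative character is a homomorphism $R^\times\to\mathbb{C}^*$; its conductor is $R$ if it is trivial, and otherwise the largest ideal $I\subseteq M$ such that it is identically $1$ on $1+I$; it is primitive if its conductor is $(0)$. $K_\tau(a)=\sum_{u\in R^\times}\tau(u)\psi(u+au^{-1})$; $G(\chi)=\sum_{u\in R^\times}\psi(u)\chi(u)$; $J(\chi,\eta)=\sum_{u,v\in R^\times,\,u+v=1}\chi(u)\eta(v)$. Odd characteristic means $R/M$ has odd characteristic; $\sigma$ is the quadratic character $u\mapsto$ quadratic character of the class of $u$ in $R/M$; $\overline\tau$ is the conjugate character. *)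

theory Defs
  imports Complex_Main
begin

definition ring_ideal :: "'a::comm_ring_1 set \<Rightarrow> bool" where
  "ring_ideal I \<longleftrightarrow> 0 \<in> I \<and> (\<forall>x\<in>I. \<forall>y\<in>I. x + y \<in> I) \<and> (\<forall>r. \<forall>x\<in>I. r * x \<in> I)"

definition maximal_ideal :: "'a::comm_ring_1 set \<Rightarrow> bool" where
  "maximal_ideal I \<longleftrightarrow> ring_ideal I \<and> I \<noteq> UNIV \<and>
     (\<forall>J. ring_ideal J \<and> I \<subseteq> J \<longrightarrow> J = I \<or> J = UNIV)"

definition local_ring :: "'a::comm_ring_1 itself \<Rightarrow> bool" where
  "local_ring _ \<longleftrightarrow> (\<exists>!M::'a set. maximal_ideal M)"

definition maxid :: "'a::comm_ring_1 set" where
  "maxid = (THE M. maximal_ideal M)"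

definition runits :: "'a::comm_ring_1 set" where
  "runits = {u. u dvd 1}"

definition uinv :: "'a::comm_ring_1 \<Rightarrow> 'a" where
  "uinv u = (THE v. u * v = 1)"

definition is_field_ring :: "'a::comm_ring_1 itself \<Rightarrow> bool" where
  "is_field_ring _ \<longleftrightarrow> (\<forall>x::'a. x \<noteq> 0 \<longrightarrow> x dvd 1)"

definition residue_char :: "'a::comm_ring_1 itself \<Rightarrow> nat" where
  "residue_char _ = (LEAST n. n > 0 \<and> (of_nat n :: 'a) \<in> maxid)"

definition additive_char :: "('a::comm_ring_1 \<Rightarrow> complex) \<Rightarrow> bool" where
  "additive_char \<psi> \<longleftrightarrow> (\<forall>x y. \<psi> (x + y) = \<psi> x * \<psi> y) \<and> (\<forall>x. \<psi> x \<noteq> 0)"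

definition primitive_additive_char :: "('a::comm_ring_1 \<Rightarrow> complex) \<Rightarrow> bool" where
  "primitive_additive_char \<psi> \<longleftrightarrow> additive_char \<psi> \<and>
     (\<forall>I. ring_ideal I \<and> (\<forall>x\<in>I. \<psi> x = 1) \<longrightarrow> I = {0})"

text \<open>A multiplicative character R^x -> C^*, represented as a function on R that
  vanishes off the units (unique such extension).\<close>
definition mult_char :: "('a::comm_ring_1 \<Rightarrow> complex) \<Rightarrow> bool" where
  "mult_char \<chi> \<longleftrightarrow> (\<forall>u\<in>runits. \<forall>v\<in>runits. \<chi> (u * v) = \<chi> u * \<chi> v)
     \<and> (\<forall>u\<in>runits. \<chi> u \<noteq> 0) \<and> (\<forall>x. x \<notin> runits \<longrightarrow> \<chi> x = 0)"

definition trivial_char :: "('a::comm_ring_1 \<Rightarrow> complex) \<Rightarrow> bool" where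
  "trivial_char \<chi> \<longleftrightarrow> (\<forall>u\<in>runits. \<chi> u = 1)"

definition conductor :: "('a::comm_ring_1 \<Rightarrow> complex) \<Rightarrow> 'a set" where
  "conductor \<chi> = (if trivial_char \<chi> then UNIV else
     (THE I. ring_ideal I \<and> I \<subseteq> maxid \<and> (\<forall>x\<in>I. \<chi> (1 + x) = 1) \<and>
        (\<forall>J. ring_ideal J \<and> J \<subseteq> maxid \<and> (\<forall>x\<in>J. \<chi> (1 + x) = 1) \<longrightarrow> J \<subseteq> I)))"

definition primitive_mult_char :: "('a::comm_ring_1 \<Rightarrow> complex) \<Rightarrow> bool" where
  "primitive_mult_char \<chi> \<longleftrightarrow> conductor \<chi> = {0}"

definition quad_char :: "'a::comm_ring_1 \<Rightarrow> complex" where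
  "quad_char u = (if u \<notin> runits then 0
     else if (\<exists>v. u - v * v \<in> maxid) then 1 else -1)"

definition kloosterman :: "('a::comm_ring_1 \<Rightarrow> complex) \<Rightarrow> ('a \<Rightarrow> complex) \<Rightarrow> 'a \<Rightarrow> complex" where
  "kloosterman \<psi> \<tau> a = (\<Sum>u\<in>runits. \<tau> u * \<psi> (u + a * uinv u))"

definition gauss_sum :: "('a::comm_ring_1 \<Rightarrow> complex) \<Rightarrow> ('a \<Rightarrow> complex) \<Rightarrow> complex" where
  "gauss_sum \<psi> \<chi> = (\<Sum>u\<in>runits. \<psi> u * \<chi> u)"

definition jacobi_sum :: "('a::comm_ring_1 \<Rightarrow> complex) \<Rightarrow> ('a \<Rightarrow> complex) \<Rightarrow> complex" where
  "jacobi_sum \<chi> \<eta> = (\<Sum>(u, v)\<in>{(u, v). u \<in> runits \<and> v \<in> runits \<and> u + v = 1}. \<chi> u * \<eta> v)"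

end

theory Submission
  imports Defs
begin



section \<open>Units\<close>

lemma runits_iff: "u \<in> runits \<longleftrightarrow> (\<exists>v. u * v = 1)"
  unfolding runits_def dvd_def by (simp add: eq_commute[of 1])

lemma uinv_unique: assumes "u * v = 1" shows "uinv u = v"
  unfolding uinv_def
proof (rule the_equality)
  fix w assume "u * w = 1"
  then have "w = w * (u * v)" using assms by simp
  also have "\<dots> = v * (u * w)" by (simp add: algebra_simps)
  finally show "w = v" using \<open>u * w = 1\<close> by simp
qed (rule assms)

lemma uinv_mult: assumes "u \<in> runits" shows "u * uinv u = 1"
  using assms uinv_unique runits_iff by metis

lemma uinv_mult2: assumes "u \<in> runits" shows "uinv u * u = 1"
  using uinv_mult[OF assms] by (simp add: mult.commute)

lemma uinv_runits: assumes "u \<in> runits" shows "uinv u \<in> runits"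
  using uinv_mult2[OF assms] runits_iff by blast

lemma runits_mult: assumes "u \<in> runits" "v \<in> runits" shows "u * v \<in> runits"
proof -
  have "(u * v) * (uinv u * uinv v) = (u * uinv u) * (v * uinv v)" by (simp add: algebra_simps)
  also have "\<dots> = 1" using assms by (simp add: uinv_mult)
  finally show ?thesis using runits_iff by blast
qed

lemma one_runits[simp]: "1 \<in> runits" using runits_iff by fastforce

lemma neg_runits: assumes "u \<in> runits" shows "- u \<in> runits"
proof -
  have "(- u) * (- uinv u) = 1" using uinv_mult[OF assms] by simp
  then show ?thesis using runits_iff by blast
qed

lemma neg_one_runits[simp]: "- 1 \<in> runits" using neg_runits[OF one_runits] .

lemma uinv_uinv: assumes "u \<in> runits" shows "uinv (uinv u) = u"
  using uinv_unique[OF uinv_mult2[OF assms]] .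

lemma uinv_mult_distrib: assumes "u \<in> runits" "v \<in> runits"
  shows "uinv (u * v) = uinv u * uinv v"
proof (rule uinv_unique)
  have "(u * v) * (uinv u * uinv v) = (u * uinv u) * (v * uinv v)" by (simp add: algebra_simps)
  also have "\<dots> = 1" using assms by (simp add: uinv_mult)
  finally show "(u * v) * (uinv u * uinv v) = 1" .
qed

lemma unit_cancel: assumes "u \<in> runits" "u * x = u * y" shows "x = y"
proof -
  have "uinv u * (u * x) = uinv u * (u * y)" using assms by simp
  then show ?thesis using uinv_mult2[OF assms(1)] by (simp add: mult.assoc[symmetric])
qed

lemma unit_zero: assumes "u \<in> runits" "u * x = 0" shows "x = 0"
  using unit_cancel[OF assms(1), of x 0] assms(2) by simp


section \<open>Ideals\<close>

lemma ideal_0: "ring_ideal I \<Longrightarrow> 0 \<in> I" unfolding ring_ideal_def by blast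
lemma ideal_add: "ring_ideal I \<Longrightarrow> x \<in> I \<Longrightarrow> y \<in> I \<Longrightarrow> x + y \<in> I" unfolding ring_ideal_def by blast
lemma ideal_mult: "ring_ideal I \<Longrightarrow> x \<in> I \<Longrightarrow> r * x \<in> I" unfolding ring_ideal_def by blast
lemma ideal_mult2: "ring_ideal I \<Longrightarrow> x \<in> I \<Longrightarrow> x * r \<in> I" unfolding ring_ideal_def by (metis mult.commute)
lemma ideal_neg: "ring_ideal I \<Longrightarrow> x \<in> I \<Longrightarrow> - x \<in> I"
  using ideal_mult[of I x "-1"] by simp
lemma ideal_diff: "ring_ideal I \<Longrightarrow> x \<in> I \<Longrightarrow> y \<in> I \<Longrightarrow> x - y \<in> I"
  using ideal_add[of I x "-y"] ideal_neg[of I y] by simp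

lemma ideal_UNIV: "ring_ideal (UNIV :: 'a::comm_ring_1 set)" unfolding ring_ideal_def by auto

lemma ideal_principal: "ring_ideal (range (\<lambda>r. r * (x::'a::comm_ring_1)))"
  unfolding ring_ideal_def
proof (intro conjI ballI allI)
  show "0 \<in> range (\<lambda>r. r * x)" by (rule range_eqI[of _ _ 0]) simp
next
  fix a b assume "a \<in> range (\<lambda>r. r * x)" "b \<in> range (\<lambda>r. r * x)"
  then obtain r s where "a = r * x" "b = s * x" by blast
  then show "a + b \<in> range (\<lambda>r. r * x)" by (intro range_eqI[of _ _ "r + s"]) (simp add: distrib_right)
next
  fix t a assume "a \<in> range (\<lambda>r. r * x)"
  then obtain r where "a = r * x" by blast
  then show "t * a \<in> range (\<lambda>r. r * x)" by (intro range_eqI[of _ _ "t * r"]) (simp add: mult.assoc)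
qed

lemma ideal_unit_UNIV: assumes "ring_ideal I" "u \<in> I" "u \<in> runits" shows "I = UNIV"
proof -
  have "\<And>r. r \<in> I"
  proof -
    fix r
    have "(r * uinv u) * u \<in> I" by (rule ideal_mult[OF assms(1,2)])
    then show "r \<in> I" using uinv_mult2[OF assms(3)] by (simp add: mult.assoc)
  qed
  then show ?thesis by auto
qed

section \<open>Local ring\<close>

locale lring =
  fixes dummy :: "'a::{comm_ring_1, finite} itself"
  assumes loc: "local_ring TYPE('a)"
begin

abbreviation M :: "'a set" where "M \<equiv> maxid"
abbreviation U :: "'a set" where "U \<equiv> runits"

lemma maxid_max: "maximal_ideal M"
proof -
  have "\<exists>!I::'a set. maximal_ideal I" using loc unfolding local_ring_def .
  then show ?thesis unfolding maxid_def by (rule theI')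
qed

lemma maxid_unique: "maximal_ideal (I::'a set) \<Longrightarrow> I = M"
  using loc maxid_max unfolding local_ring_def by blast

lemma M_ideal: "ring_ideal M" using maxid_max maximal_ideal_def by blast

lemma M_ne_UNIV: "M \<noteq> UNIV" using maxid_max maximal_ideal_def by blast

lemma M_no_unit: "u \<in> runits \<Longrightarrow> u \<notin> M"
  using ideal_unit_UNIV[OF M_ideal] M_ne_UNIV by blast

lemma one_notin_M: "(1::'a) \<notin> M" using M_no_unit by simp


lemma nonunit_in_M: assumes "x \<notin> runits" shows "x \<in> M"
proof -
  let ?I0 = "range (\<lambda>r. r * x)"
  let ?P = "{I::'a set. ring_ideal I \<and> I \<noteq> UNIV \<and> ?I0 \<subseteq> I}"
  have I0: "?I0 \<in> ?P"
  proof -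
    have "1 \<notin> ?I0" using assms runits_iff by (auto, metis mult.commute)
    then show ?thesis using ideal_principal by auto
  qed
  have "finite ?P" by simp
  then obtain I where I: "I \<in> ?P" and Imax: "\<forall>J\<in>?P. I \<le> J \<longrightarrow> I = J"
    using finite_has_maximal[of ?P] I0 by blast
  have "maximal_ideal I"
    unfolding maximal_ideal_def
  proof (intro conjI allI impI)
    show "ring_ideal I" "I \<noteq> UNIV" using I by auto
    fix J assume J: "ring_ideal J \<and> I \<subseteq> J"
    show "J = I \<or> J = UNIV"
    proof (cases "J = UNIV")
      case False
      then have "J \<in> ?P" using J I by auto
      then show ?thesis using Imax J by blast
    qed simp
  qed
  then have "I = M" by (rule maxid_unique)
  moreover have "x \<in> I" using I range_eqI[of x "\<lambda>r. r * x" 1] by auto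
  ultimately show ?thesis by simp
qed

lemma in_M_iff: "x \<in> M \<longleftrightarrow> x \<notin> runits"
  using nonunit_in_M M_no_unit by blast

lemma unit_add_M: assumes "u \<in> runits" "m \<in> M" shows "u + m \<in> runits"
proof (rule ccontr)
  assume "u + m \<notin> runits"
  then have "u + m \<in> M" using nonunit_in_M by blast
  then have "(u + m) - m \<in> M" using ideal_diff[OF M_ideal] assms(2) by blast
  then show False using M_no_unit assms(1) by simp
qed

lemma one_plus_M: "m \<in> M \<Longrightarrow> 1 + m \<in> runits" using unit_add_M[OF one_runits] .

end



definition annM :: "'a::comm_ring_1 set" where "annM = {x. \<forall>m\<in>maxid. m * x = 0}"

definition good :: "('a::comm_ring_1 \<Rightarrow> complex) \<Rightarrow> 'a set \<Rightarrow> bool" where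
  "good \<chi> I \<longleftrightarrow> ring_ideal I \<and> I \<subseteq> maxid \<and> (\<forall>x\<in>I. \<chi> (1 + x) = 1)"

lemma sum_reindex_unit:
  assumes "c \<in> runits"
  shows "(\<Sum>u\<in>runits. f (c * u)) = (\<Sum>u\<in>runits. f u)"
proof (rule sum.reindex_bij_witness[where j = "\<lambda>u. c * u" and i = "\<lambda>u. uinv c * u"])
  fix a assume "a \<in> (runits::'a set)"
  show "uinv c * (c * a) = a" using uinv_mult2[OF assms] by (simp add: mult.assoc[symmetric])
  show "c * a \<in> runits" using runits_mult[OF assms \<open>a \<in> runits\<close>] .
  show "f (c * a) = f (c * a)" ..
next
  fix b assume "b \<in> (runits::'a set)"
  show "c * (uinv c * b) = b" using uinv_mult[OF assms] by (simp add: mult.assoc[symmetric])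
  show "uinv c * b \<in> runits" using runits_mult[OF uinv_runits[OF assms] \<open>b \<in> runits\<close>] .
qed

lemma mult_char_mult: "mult_char \<chi> \<Longrightarrow> u \<in> runits \<Longrightarrow> v \<in> runits \<Longrightarrow> \<chi> (u * v) = \<chi> u * \<chi> v"
  unfolding mult_char_def by blast

lemma mult_char_nz: "mult_char \<chi> \<Longrightarrow> u \<in> runits \<Longrightarrow> \<chi> u \<noteq> 0"
  unfolding mult_char_def by blast

lemma mult_char_zero: "mult_char \<chi> \<Longrightarrow> x \<notin> runits \<Longrightarrow> \<chi> x = 0"
  unfolding mult_char_def by blast

lemma mult_char_one: assumes "mult_char \<chi>" shows "\<chi> 1 = 1"
proof -
  have "\<chi> 1 = \<chi> 1 * \<chi> 1" using mult_char_mult[OF assms, of 1 1] by simp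
  moreover have "\<chi> 1 \<noteq> 0" using mult_char_nz[OF assms] by simp
  ultimately show ?thesis by (metis mult_cancel_left1)
qed

lemma mult_char_uinv: assumes "mult_char \<chi>" "u \<in> runits" shows "\<chi> u * \<chi> (uinv u) = 1"
  using mult_char_mult[OF assms(1,2) uinv_runits[OF assms(2)]] uinv_mult[OF assms(2)]
    mult_char_one[OF assms(1)] by simp

lemma sum_char_nontriv:
  assumes "mult_char \<chi>" "u0 \<in> runits" "\<chi> u0 \<noteq> 1"
  shows "(\<Sum>u\<in>runits. \<chi> u) = 0"
proof -
  have "(\<Sum>u\<in>runits. \<chi> u) = (\<Sum>u\<in>runits. \<chi> (u0 * u))" using sum_reindex_unit[OF assms(2)] by metis
  also have "\<dots> = \<chi> u0 * (\<Sum>u\<in>runits. \<chi> u)"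
    by (simp add: sum_distrib_left mult_char_mult[OF assms(1) assms(2)])
  finally have "(1 - \<chi> u0) * (\<Sum>u\<in>runits. \<chi> u) = 0" by (simp add: algebra_simps)
  then show ?thesis using assms(3) by simp
qed

lemma sum_char_triv:
  assumes "\<forall>u\<in>runits. \<chi> u = 1"
  shows "(\<Sum>u\<in>(runits::'a::{comm_ring_1,finite} set). \<chi> u) = of_nat (card (runits::'a set))"
  using assms by simp

lemma mult_char_norm: assumes "mult_char \<chi>" "u \<in> (runits::'a::{comm_ring_1,finite} set)"
  shows "norm (\<chi> u) = 1"
proof -
  have "\<not> inj (\<lambda>n::nat. u ^ n)"
  proof
    assume "inj (\<lambda>n::nat. u ^ n)"
    then have "finite (UNIV :: nat set)" using finite_imageD[of "\<lambda>n::nat. u ^ n" UNIV] by simp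
    then show False by simp
  qed
  then obtain i j :: nat where ij: "i \<noteq> j" "u ^ i = u ^ j" unfolding inj_def by blast
  have pw: "\<And>n. u ^ n \<in> runits \<and> \<chi> (u ^ n) = \<chi> u ^ n"
  proof -
    fix n show "u ^ n \<in> runits \<and> \<chi> (u ^ n) = \<chi> u ^ n"
      by (induction n) (auto simp: mult_char_one[OF assms(1)] runits_mult[OF assms(2)]
            mult_char_mult[OF assms(1) assms(2)])
  qed
  have "\<chi> u ^ i = \<chi> u ^ j" using pw ij(2) by metis
  then have "norm (\<chi> u) ^ i = norm (\<chi> u) ^ j" by (metis norm_power)
  moreover have "norm (\<chi> u) > 0" using mult_char_nz[OF assms] by simp
  ultimately show ?thesis using ij(1) by (metis power_inject_exp' less_irrefl nat_neq_iff power_0 power_0_Suc one_neq_zero)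
qed

lemma mult_char_cnj: assumes "mult_char \<chi>" "u \<in> (runits::'a::{comm_ring_1,finite} set)"
  shows "\<chi> u * cnj (\<chi> u) = 1"
  using mult_char_norm[OF assms] by (simp add: complex_norm_square[symmetric])

context lring
begin

lemma annM_ideal: "ring_ideal (annM :: 'a set)"
  unfolding ring_ideal_def annM_def
proof (intro conjI ballI allI; clarify?)
  fix x y m assume "\<forall>m\<in>M. m * x = 0" "\<forall>m\<in>M. m * y = 0" "m \<in> M"
  then show "m * (x + y) = 0" by (simp add: distrib_left)
next
  fix r x m assume "\<forall>m\<in>M. m * x = 0" "m \<in> M"
  then show "m * (r * x) = 0" by (simp add: mult.left_commute[of m r])
qed simp

lemma annM_sub_M: assumes "M \<noteq> {0}" shows "(annM :: 'a set) \<subseteq> M"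
proof
  fix v :: 'a assume v: "v \<in> annM"
  show "v \<in> M"
  proof (rule ccontr)
    assume "v \<notin> M"
    then have vu: "v \<in> runits" using nonunit_in_M by blast
    have "M \<subseteq> {0}"
    proof
      fix m assume "m \<in> M"
      then have "v * m = 0" using v unfolding annM_def by (simp add: mult.commute)
      then show "m \<in> {0}" using unit_zero[OF vu] by simp
    qed
    then show False using assms ideal_0[OF M_ideal] by blast
  qed
qed

lemma good_sum:
  fixes \<chi> :: "'a \<Rightarrow> complex"
  assumes ch: "mult_char \<chi>" and I: "good \<chi> I" and J: "good \<chi> J"
  shows "good \<chi> {i + j |i j. i \<in> I \<and> j \<in> J}"
  unfolding good_def
proof (intro conjI ballI)
  have iI: "ring_ideal I" "I \<subseteq> M" and iJ: "ring_ideal J" "J \<subseteq> M" using I J unfolding good_def by auto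
  show "ring_ideal {i + j |i j. i \<in> I \<and> j \<in> J}"
    unfolding ring_ideal_def
  proof (intro conjI ballI allI)
    show "0 \<in> {i + j |i j. i \<in> I \<and> j \<in> J}" using ideal_0[OF iI(1)] ideal_0[OF iJ(1)] by force
    fix x y assume "x \<in> {i + j |i j. i \<in> I \<and> j \<in> J}" "y \<in> {i + j |i j. i \<in> I \<and> j \<in> J}"
    then obtain i j i' j' where "x = i + j" "y = i' + j'" "i \<in> I" "j \<in> J" "i' \<in> I" "j' \<in> J" by blast
    moreover have "x + y = (i + i') + (j + j')" using \<open>x = i + j\<close> \<open>y = i' + j'\<close> by (simp add: algebra_simps)
    moreover have "i + i' \<in> I" "j + j' \<in> J" using ideal_add[OF iI(1)] ideal_add[OF iJ(1)] \<open>i \<in> I\<close> \<open>i' \<in> I\<close> \<open>j \<in> J\<close> \<open>j' \<in> J\<close> by auto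
    ultimately show "x + y \<in> {i + j |i j. i \<in> I \<and> j \<in> J}" by blast
  next
    fix r x assume "x \<in> {i + j |i j. i \<in> I \<and> j \<in> J}"
    then obtain i j where "x = i + j" "i \<in> I" "j \<in> J" by blast
    moreover have "r * x = r * i + r * j" using \<open>x = i + j\<close> by (simp add: distrib_left)
    moreover have "r * i \<in> I" "r * j \<in> J" using ideal_mult[OF iI(1)] ideal_mult[OF iJ(1)] \<open>i \<in> I\<close> \<open>j \<in> J\<close> by auto
    ultimately show "r * x \<in> {i + j |i j. i \<in> I \<and> j \<in> J}" by blast
  qed
  show "{i + j |i j. i \<in> I \<and> j \<in> J} \<subseteq> M"
    using iI iJ ideal_add[OF M_ideal] by blast
  fix x assume "x \<in> {i + j |i j. i \<in> I \<and> j \<in> J}"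
  then obtain i j where x: "x = i + j" "i \<in> I" "j \<in> J" by blast
  have u1: "1 + i \<in> runits" using one_plus_M x(2) iI by blast
  define w where "w = uinv (1 + i)"
  have wj: "w * j \<in> J" using ideal_mult[OF iJ(1) x(3)] .
  have u2: "1 + w * j \<in> runits" using one_plus_M wj iJ by blast
  have "(1 + i) * (1 + w * j) = 1 + i + ((1 + i) * w) * j" by (simp add: algebra_simps)
  also have "\<dots> = 1 + x" using uinv_mult[OF u1] x(1) unfolding w_def by simp
  finally have "\<chi> (1 + x) = \<chi> (1 + i) * \<chi> (1 + w * j)" using mult_char_mult[OF ch u1 u2] by simp
  also have "\<dots> = 1" using I J x(2) wj unfolding good_def by simp
  finally show "\<chi> (1 + x) = 1" .
qed

lemma conductor_good:
  fixes \<chi> :: "'a \<Rightarrow> complex"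
  assumes ch: "mult_char \<chi>" and nt: "\<not> trivial_char \<chi>"
  shows "good \<chi> (conductor \<chi>) \<and> (\<forall>J. good \<chi> J \<longrightarrow> J \<subseteq> conductor \<chi>)"
proof -
  let ?G = "{I. good \<chi> I}"
  have "{0} \<in> ?G" unfolding good_def ring_ideal_def using ideal_0[OF M_ideal] mult_char_one[OF ch] by auto
  moreover have "finite ?G" by simp
  ultimately obtain G where G: "good \<chi> G" and Gmax: "\<forall>J\<in>?G. G \<le> J \<longrightarrow> G = J"
    using finite_has_maximal[of ?G] by blast
  have big: "\<forall>J. good \<chi> J \<longrightarrow> J \<subseteq> G"
  proof (intro allI impI)
    fix J assume J: "good \<chi> J"
    let ?S = "{i + j |i j. i \<in> G \<and> j \<in> J}"
    have gS: "good \<chi> ?S" by (rule good_sum[OF ch G J])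
    have "G \<subseteq> ?S"
    proof
      fix g assume "g \<in> G"
      then show "g \<in> ?S" using ideal_0[of J] J unfolding good_def by force
    qed
    then have "G = ?S" using Gmax gS by blast
    moreover have "J \<subseteq> ?S" using ideal_0[of G] G unfolding good_def by force
    ultimately show "J \<subseteq> G" by simp
  qed
  have "conductor \<chi> = G"
    unfolding conductor_def using nt
  proof (simp, intro the_equality)
    show "ring_ideal G \<and> G \<subseteq> M \<and> (\<forall>x\<in>G. \<chi> (1 + x) = 1) \<and>
       (\<forall>J. ring_ideal J \<and> J \<subseteq> M \<and> (\<forall>x\<in>J. \<chi> (1 + x) = 1) \<longrightarrow> J \<subseteq> G)"
      using G big unfolding good_def by blast
    fix I assume "ring_ideal I \<and> I \<subseteq> M \<and> (\<forall>x\<in>I. \<chi> (1 + x) = 1) \<and>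
       (\<forall>J. ring_ideal J \<and> J \<subseteq> M \<and> (\<forall>x\<in>J. \<chi> (1 + x) = 1) \<longrightarrow> J \<subseteq> I)"
    then show "I = G" using G big unfolding good_def by blast
  qed
  then show ?thesis using G big by simp
qed

end

locale frob = lring dummy for dummy :: "'a::{comm_ring_1,finite} itself" +
  fixes \<psi> :: "'a \<Rightarrow> complex"
  assumes psi: "primitive_additive_char \<psi>"
begin

lemma psi_add: "\<psi> (x + y) = \<psi> x * \<psi> y"
  using psi unfolding primitive_additive_char_def additive_char_def by blast

lemma psi_0: "\<psi> 0 = 1"
proof -
  have "\<psi> 0 = \<psi> 0 * \<psi> 0" using psi_add[of 0 0] by simp
  moreover have "\<psi> 0 \<noteq> 0" using psi unfolding primitive_additive_char_def additive_char_def by blast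
  ultimately show ?thesis by (metis mult_cancel_left1)
qed

lemma psi_nontriv: assumes "ring_ideal I" "I \<noteq> {0}" shows "\<exists>x\<in>I. \<psi> x \<noteq> 1"
  using psi assms unfolding primitive_additive_char_def by blast

lemma Lorth:
  assumes I: "ring_ideal I"
  shows "(\<Sum>y\<in>I. \<psi> (c * y)) = (if \<forall>y\<in>I. c * y = 0 then of_nat (card I) else 0)"
proof (cases "\<forall>y\<in>I. c * y = 0")
  case True
  then show ?thesis by (simp add: psi_0)
next
  case False
  let ?C = "(\<lambda>y. c * y) ` I"
  have "ring_ideal ?C" unfolding ring_ideal_def
  proof (intro conjI ballI allI)
    show "0 \<in> ?C" using ideal_0[OF I] by (metis image_eqI mult_zero_right)
    fix x y assume "x \<in> ?C" "y \<in> ?C"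
    then obtain a b where "x = c * a" "y = c * b" "a \<in> I" "b \<in> I" by blast
    then show "x + y \<in> ?C" using ideal_add[OF I] by (metis distrib_left image_eqI)
  next
    fix r x assume "x \<in> ?C"
    then obtain a where "x = c * a" "a \<in> I" by blast
    then show "r * x \<in> ?C" using ideal_mult[OF I] by (metis image_eqI mult.left_commute)
  qed
  moreover have "?C \<noteq> {0}" using False by auto
  ultimately obtain y0 where y0: "y0 \<in> I" "\<psi> (c * y0) \<noteq> 1" using psi_nontriv by blast
  have "(\<Sum>y\<in>I. \<psi> (c * y)) = (\<Sum>y\<in>I. \<psi> (c * (y + y0)))"
  proof (rule sum.reindex_bij_witness[where j = "\<lambda>y. y - y0" and i = "\<lambda>y. y + y0"])
    fix a assume "a \<in> I"
    show "a - y0 + y0 = a" by simp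
    show "a - y0 \<in> I" using ideal_diff[OF I \<open>a \<in> I\<close> y0(1)] .
    show "\<psi> (c * (a - y0 + y0)) = \<psi> (c * a)" by simp
  next
    fix b assume "b \<in> I"
    show "b + y0 - y0 = b" by simp
    show "b + y0 \<in> I" using ideal_add[OF I \<open>b \<in> I\<close> y0(1)] .
  qed
  also have "\<dots> = \<psi> (c * y0) * (\<Sum>y\<in>I. \<psi> (c * y))"
    by (simp add: distrib_left psi_add sum_distrib_left mult.commute)
  finally have "(1 - \<psi> (c * y0)) * (\<Sum>y\<in>I. \<psi> (c * y)) = 0" by (simp add: algebra_simps)
  then have "(\<Sum>y\<in>I. \<psi> (c * y)) = 0" using y0(2) by simp
  then show ?thesis by (simp only: if_not_P[OF False])
qed

end



context frob
begin

lemma card_W: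
  fixes W :: "'a set"
  assumes W: "ring_ideal W" "W \<subseteq> annM" "W \<noteq> {0}"
  shows "card W * card M = card (UNIV :: 'a set)"
proof -
  have inner: "\<And>c. (\<Sum>s\<in>W. \<psi> (c * s)) = (if c \<in> M then of_nat (card W) else 0)"
  proof -
    fix c :: 'a
    show "(\<Sum>s\<in>W. \<psi> (c * s)) = (if c \<in> M then of_nat (card W) else 0)"
    proof (cases "c \<in> M")
      case True
      then have "\<forall>s\<in>W. c * s = 0" using W(2) unfolding annM_def by blast
      then show ?thesis using Lorth[OF W(1), of c] True by simp
    next
      case False
      then have cu: "c \<in> runits" using in_M_iff by blast
      obtain s where "s \<in> W" "s \<noteq> 0" using W(3) ideal_0[OF W(1)] by blast
      then have nn: "\<not> (\<forall>s\<in>W. c * s = 0)" using unit_zero[OF cu] by blast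
      show ?thesis unfolding Lorth[OF W(1), of c] if_not_P[OF nn] if_not_P[OF False] ..
    qed
  qed
  have "(\<Sum>c\<in>UNIV. \<Sum>s\<in>W. \<psi> (c * s)) = (\<Sum>c\<in>UNIV. if c \<in> M then of_nat (card W) else (0::complex))"
    using inner by simp
  also have "\<dots> = (\<Sum>c\<in>UNIV \<inter> M. of_nat (card W))"
    by (rule sum.inter_restrict[symmetric]) simp
  also have "\<dots> = of_nat (card M * card W)" by simp
  finally have 1: "(\<Sum>c\<in>UNIV. \<Sum>s\<in>W. \<psi> (c * s)) = of_nat (card M * card W)" .
  have "(\<Sum>c\<in>UNIV. \<Sum>s\<in>W. \<psi> (c * s)) = (\<Sum>s\<in>W. \<Sum>c\<in>UNIV. \<psi> (s * c))"
    by (subst sum.swap) (simp add: mult.commute)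
  also have "\<dots> = (\<Sum>s\<in>W. if s = 0 then of_nat (card (UNIV :: 'a set)) else 0)"
  proof (rule sum.cong[OF refl])
    fix s :: 'a assume "s \<in> W"
    have "(\<forall>c\<in>UNIV. s * c = 0) \<longleftrightarrow> s = 0" by (metis mult_1_right mult_zero_left UNIV_I)
    then show "(\<Sum>c\<in>UNIV. \<psi> (s * c)) = (if s = 0 then of_nat (card (UNIV :: 'a set)) else 0)"
      using Lorth[OF ideal_UNIV, of s] by simp
  qed
  also have "\<dots> = of_nat (card (UNIV :: 'a set))" using ideal_0[OF W(1)] by (simp add: sum.delta)
  finally have "of_nat (card M * card W) = (of_nat (card (UNIV :: 'a set)) :: complex)" using 1 by simp
  then show ?thesis by (simp only: of_nat_eq_iff mult.commute)
qed

lemma exists_annM: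
  fixes J :: "'a set"
  assumes J: "ring_ideal J" and "x \<in> J" "x \<noteq> 0"
  shows "\<exists>y\<in>J. y \<noteq> 0 \<and> y \<in> annM"
  using assms(2,3)
proof (induction "card (range (\<lambda>r. r * x))" arbitrary: x rule: less_induct)
  case less
  show ?case
  proof (cases "x \<in> annM")
    case True
    then show ?thesis using less.prems by blast
  next
    case False
    then obtain m where m: "m \<in> M" "m * x \<noteq> 0" unfolding annM_def by blast
    define y where "y = m * x"
    have yJ: "y \<in> J" unfolding y_def using ideal_mult[OF J less.prems(1)] .
    have sub: "range (\<lambda>r. r * y) \<subseteq> range (\<lambda>r. r * x)"
    proof
      fix z assume "z \<in> range (\<lambda>r. r * y)"
      then obtain r where "z = r * y" by blast
      then have "z = (r * m) * x" unfolding y_def by (simp add: mult.assoc)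
      then show "z \<in> range (\<lambda>r. r * x)" by blast
    qed
    have notin: "x \<notin> range (\<lambda>r. r * y)"
    proof
      assume "x \<in> range (\<lambda>r. r * y)"
      then obtain r where r: "x = r * y" by blast
      have "r * m \<in> M" using ideal_mult[OF M_ideal m(1)] .
      then have "- (r * m) \<in> M" using ideal_neg[OF M_ideal] by blast
      then have u: "1 + - (r * m) \<in> runits" using one_plus_M by blast
      have "(1 + - (r * m)) * x = x - r * y" unfolding y_def by (simp add: algebra_simps)
      also have "\<dots> = 0" using r by simp
      finally have "x = 0" using unit_zero[OF u] by blast
      then show False using less.prems by blast
    qed
    have "x \<in> range (\<lambda>r. r * x)" by (rule range_eqI[of _ _ 1]) simp
    then have "range (\<lambda>r. r * y) \<subset> range (\<lambda>r. r * x)" using sub notin by blast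
    then have "card (range (\<lambda>r. r * y)) < card (range (\<lambda>r. r * x))"
      by (rule psubset_card_mono[rotated]) simp
    then show ?thesis using less.hyps[OF _ yJ] m(2) unfolding y_def by blast
  qed
qed

lemma annM_ne0: "(annM :: 'a set) \<noteq> {0}"
  using exists_annM[OF ideal_UNIV, of 1] by auto

lemma annM_sub:
  fixes J :: "'a set"
  assumes J: "ring_ideal J" "J \<noteq> {0}"
  shows "annM \<subseteq> J"
proof -
  obtain x where "x \<in> J" "x \<noteq> 0" using J ideal_0[OF J(1)] by blast
  then obtain y where y: "y \<in> J" "y \<noteq> 0" "y \<in> annM" using exists_annM[OF J(1)] by blast
  let ?W = "range (\<lambda>r. r * y)"
  have Wi: "ring_ideal ?W" by (rule ideal_principal)
  have Ws: "?W \<subseteq> annM"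
  proof
    fix z assume "z \<in> ?W"
    then obtain r where "z = r * y" by blast
    have "\<forall>m\<in>M. m * z = 0"
    proof
      fix m assume "m \<in> M"
      then have "m * y = 0" using y(3) unfolding annM_def by blast
      then show "m * z = 0" using \<open>z = r * y\<close> by (simp add: mult.left_commute[of m r])
    qed
    then show "z \<in> annM" unfolding annM_def by blast
  qed
  have yW: "y \<in> ?W" by (rule range_eqI[of _ _ 1]) simp
  have Wn: "?W \<noteq> {0}" using yW y(2) by blast
  have "card ?W * card M = card (annM :: 'a set) * card M"
    using card_W[OF Wi Ws Wn] card_W[OF annM_ideal order_refl annM_ne0] by simp
  moreover have "card M > 0" using ideal_0[OF M_ideal] by (simp add: card_gt_0_iff) blast
  ultimately have "card ?W = card (annM :: 'a set)" by (metis mult_right_cancel not_gr0)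
  then have "?W = annM" using Ws by (intro card_subset_eq) simp_all
  moreover have "?W \<subseteq> J" using ideal_mult[OF J(1) y(1)] by blast
  ultimately show ?thesis by simp
qed

lemma card_annM_M: "card (annM :: 'a set) * card M = card (UNIV :: 'a set)"
  using card_W[OF annM_ideal order_refl annM_ne0] .

lemma L_prim:
  fixes \<chi> :: "'a \<Rightarrow> complex"
  assumes ch: "mult_char \<chi>" and pr: "primitive_mult_char \<chi>"
  shows "\<not> trivial_char \<chi> \<and> (M \<noteq> {0} \<longrightarrow> (\<exists>v\<in>annM. \<chi> (1 + v) \<noteq> 1))"
proof -
  have nt: "\<not> trivial_char \<chi>"
  proof
    assume "trivial_char \<chi>"
    then have "(UNIV :: 'a set) = {0}" using pr unfolding primitive_mult_char_def conductor_def by simp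
    then show False by (metis UNIV_I singletonD zero_neq_one)
  qed
  moreover have "M \<noteq> {0} \<longrightarrow> (\<exists>v\<in>annM. \<chi> (1 + v) \<noteq> 1)"
  proof
    assume M0: "M \<noteq> {0}"
    show "\<exists>v\<in>annM. \<chi> (1 + v) \<noteq> 1"
    proof (rule ccontr)
      assume "\<not> ?thesis"
      then have "good \<chi> annM" unfolding good_def using annM_ideal annM_sub_M[OF M0] by blast
      then have "annM \<subseteq> conductor \<chi>" using conductor_good[OF ch nt] by blast
      then have "annM \<subseteq> {0::'a}" using pr unfolding primitive_mult_char_def by simp
      then show False using annM_ne0 ideal_0[OF annM_ideal] by blast
    qed
  qed
  ultimately show ?thesis by blast
qed

lemma L_nonprim:
  fixes \<tau> :: "'a \<Rightarrow> complex"
  assumes ch: "mult_char \<tau>" and np: "\<not> primitive_mult_char \<tau>"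
  shows "(M = {0} \<longrightarrow> trivial_char \<tau>) \<and> (M \<noteq> {0} \<longrightarrow> (\<forall>v\<in>annM. \<tau> (1 + v) = 1))"
proof (cases "trivial_char \<tau>")
  case True
  have "M \<noteq> {0} \<longrightarrow> (\<forall>v\<in>annM. \<tau> (1 + v) = 1)"
  proof (intro impI ballI)
    fix v :: 'a assume "M \<noteq> {0}" "v \<in> annM"
    then have "v \<in> M" using annM_sub_M by blast
    then have "1 + v \<in> runits" using one_plus_M by blast
    then show "\<tau> (1 + v) = 1" using True unfolding trivial_char_def by blast
  qed
  then show ?thesis using True by blast
next
  case False
  have g: "good \<tau> (conductor \<tau>)" and gm: "\<forall>J. good \<tau> J \<longrightarrow> J \<subseteq> conductor \<tau>"
    using conductor_good[OF ch False] by auto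
  have Cne: "conductor \<tau> \<noteq> {0}" using np unfolding primitive_mult_char_def .
  have Ci: "ring_ideal (conductor \<tau>)" "conductor \<tau> \<subseteq> M" using g unfolding good_def by auto
  have "M \<noteq> {0}"
  proof
    assume "M = {0}"
    then have "conductor \<tau> \<subseteq> {0}" using Ci by simp
    then show False using Cne ideal_0[OF Ci(1)] by blast
  qed
  moreover have "annM \<subseteq> conductor \<tau>" using annM_sub[OF Ci(1) Cne] .
  ultimately show ?thesis using g unfolding good_def by blast
qed

lemma T_unit:
  fixes \<gamma> :: "'a \<Rightarrow> complex"
  assumes ch: "mult_char \<gamma>" and b: "b \<in> runits"
  shows "(\<Sum>u\<in>runits. \<gamma> u * \<psi> (u * b)) = \<gamma> (uinv b) * gauss_sum \<psi> \<gamma>"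
proof -
  have bi: "uinv b \<in> runits" using uinv_runits[OF b] .
  have "(\<Sum>u\<in>runits. \<gamma> u * \<psi> (u * b)) = (\<Sum>u\<in>runits. \<gamma> (uinv b * u) * \<psi> ((uinv b * u) * b))"
    using sum_reindex_unit[OF bi, of "\<lambda>u. \<gamma> u * \<psi> (u * b)"] by simp
  also have "\<dots> = (\<Sum>u\<in>runits. \<gamma> (uinv b) * (\<psi> u * \<gamma> u))"
  proof (rule sum.cong[OF refl])
    fix u :: 'a assume u: "u \<in> runits"
    have "(uinv b * u) * b = u * (uinv b * b)" by (simp add: algebra_simps)
    then have "(uinv b * u) * b = u" using uinv_mult2[OF b] by simp
    then show "\<gamma> (uinv b * u) * \<psi> ((uinv b * u) * b) = \<gamma> (uinv b) * (\<psi> u * \<gamma> u)"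
      using mult_char_mult[OF ch bi u] by simp
  qed
  also have "\<dots> = \<gamma> (uinv b) * gauss_sum \<psi> \<gamma>" unfolding gauss_sum_def by (simp add: sum_distrib_left)
  finally show ?thesis .
qed

lemma T_nonunit:
  fixes \<gamma> :: "'a \<Rightarrow> complex"
  assumes ch: "mult_char \<gamma>" and nt: "\<exists>u0\<in>runits. \<gamma> u0 \<noteq> 1"
    and nv: "M \<noteq> {0} \<longrightarrow> (\<exists>v\<in>annM. \<gamma> (1 + v) \<noteq> 1)" and b: "b \<notin> runits"
  shows "(\<Sum>u\<in>runits. \<gamma> u * \<psi> (u * b)) = 0"
proof (cases "b = 0")
  case True
  then show ?thesis using sum_char_nontriv[OF ch] nt psi_0 by auto
next
  case False
  have bM: "b \<in> M" using b nonunit_in_M by blast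
  then have "M \<noteq> {0}" using False by blast
  then obtain v where v: "v \<in> annM" "\<gamma> (1 + v) \<noteq> 1" using nv by blast
  have hU: "1 + v \<in> runits" using v(1) annM_sub_M[OF \<open>M \<noteq> {0}\<close>] one_plus_M by blast
  have vb: "b * v = 0" using v(1) bM unfolding annM_def by blast
  let ?S = "(\<Sum>u\<in>runits. \<gamma> u * \<psi> (u * b))"
  have "?S = (\<Sum>u\<in>runits. \<gamma> ((1 + v) * u) * \<psi> (((1 + v) * u) * b))"
    using sum_reindex_unit[OF hU, of "\<lambda>u. \<gamma> u * \<psi> (u * b)"] by simp
  also have "\<dots> = (\<Sum>u\<in>runits. \<gamma> (1 + v) * (\<gamma> u * \<psi> (u * b)))"
  proof (rule sum.cong[OF refl])
    fix u :: 'a assume u: "u \<in> runits"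
    have "((1 + v) * u) * b = u * b + u * (b * v)" by (simp add: algebra_simps)
    also have "\<dots> = u * b" using vb by simp
    finally show "\<gamma> ((1 + v) * u) * \<psi> (((1 + v) * u) * b) = \<gamma> (1 + v) * (\<gamma> u * \<psi> (u * b))"
      using mult_char_mult[OF ch hU u] by simp
  qed
  also have "\<dots> = \<gamma> (1 + v) * ?S" by (simp add: sum_distrib_left)
  finally have "(1 - \<gamma> (1 + v)) * ?S = 0" by (simp add: algebra_simps)
  then show ?thesis using v(2) by simp
qed

end



lemma mult_char_prod:
  assumes "mult_char \<chi>" "mult_char \<tau>"
  shows "mult_char (\<lambda>u. \<chi> u * \<tau> u)"
  using assms unfolding mult_char_def by (auto simp: algebra_simps)

context frob
begin

lemma part1:
  fixes \<chi> \<tau> :: "'a \<Rightarrow> complex"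
  assumes chi: "mult_char \<chi>" and chip: "primitive_mult_char \<chi>"
    and tau: "mult_char \<tau>" and taunp: "\<not> primitive_mult_char \<tau>"
  shows "(\<Sum>a\<in>runits. \<chi> a * (kloosterman \<psi> \<tau> a)\<^sup>2) =
    jacobi_sum \<chi> (\<lambda>u. \<chi> u * (\<tau> u)\<^sup>2) * (gauss_sum \<psi> (\<lambda>u. \<chi> u * \<tau> u))\<^sup>2"
proof -
  define \<gamma> where "\<gamma> = (\<lambda>u. \<chi> u * \<tau> u)"
  define G where "G = gauss_sum \<psi> \<gamma>"
  define T where "T = (\<lambda>b. \<Sum>u\<in>runits. \<gamma> u * \<psi> (u * b))"
  have gam: "mult_char \<gamma>" unfolding \<gamma>_def by (rule mult_char_prod[OF chi tau])
  have Lc: "\<not> trivial_char \<chi> \<and> (M \<noteq> {0} \<longrightarrow> (\<exists>v\<in>annM. \<chi> (1 + v) \<noteq> 1))"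
    by (rule L_prim[OF chi chip])
  have Lt: "(M = {0} \<longrightarrow> trivial_char \<tau>) \<and> (M \<noteq> {0} \<longrightarrow> (\<forall>v\<in>annM. \<tau> (1 + v) = 1))"
    by (rule L_nonprim[OF tau taunp])
  have nv: "M \<noteq> {0} \<longrightarrow> (\<exists>v\<in>annM. \<gamma> (1 + v) \<noteq> 1)"
    using Lc Lt unfolding \<gamma>_def by auto
  have nt: "\<exists>u0\<in>runits. \<gamma> u0 \<noteq> 1"
  proof (cases "M = {0}")
    case True
    then have "trivial_char \<tau>" using Lt by blast
    moreover obtain u0 where "u0 \<in> runits" "\<chi> u0 \<noteq> 1" using Lc unfolding trivial_char_def by blast
    ultimately show ?thesis unfolding \<gamma>_def trivial_char_def by auto
  next
    case False
    then obtain v where v: "v \<in> annM" "\<gamma> (1 + v) \<noteq> 1" using nv by blast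
    have "v \<in> M" using v(1) annM_sub_M[OF False] by blast
    then show ?thesis using v(2) one_plus_M by blast
  qed
  have Tval: "\<And>b. T b = (if b \<in> runits then \<gamma> (uinv b) * G else 0)"
    unfolding T_def G_def using T_unit[OF gam] T_nonunit[OF gam nt nv] by simp
  have "(\<Sum>a\<in>runits. \<chi> a * (kloosterman \<psi> \<tau> a)\<^sup>2) =
      (\<Sum>a\<in>runits. \<Sum>u\<in>runits. \<Sum>v\<in>runits.
          \<chi> a * ((\<tau> u * \<psi> (u + a * uinv u)) * (\<tau> v * \<psi> (v + a * uinv v))))"
    unfolding kloosterman_def power2_eq_square
    by (subst sum_product, subst sum_distrib_left, subst sum_distrib_left, rule refl)
  also have "\<dots> = (\<Sum>u\<in>runits. \<Sum>v\<in>runits. \<Sum>a\<in>runits.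
          \<chi> a * ((\<tau> u * \<psi> (u + a * uinv u)) * (\<tau> v * \<psi> (v + a * uinv v))))"
    apply (rule trans[OF sum.swap])
    apply (rule sum.cong[OF refl])
    apply (rule sum.swap)
    done
  also have "\<dots> = (\<Sum>u\<in>runits. \<Sum>v\<in>runits. \<Sum>x\<in>runits.
          \<chi> x * ((\<gamma> u * \<psi> (u * (1 + x))) * (\<gamma> v * \<psi> (v * (1 + x)))))"
  proof (rule sum.cong[OF refl], rule sum.cong[OF refl])
    fix u v :: 'a assume u: "u \<in> runits" and v: "v \<in> runits"
    have uv: "u * v \<in> runits" using runits_mult[OF u v] .
    have "(\<Sum>a\<in>runits. \<chi> a * ((\<tau> u * \<psi> (u + a * uinv u)) * (\<tau> v * \<psi> (v + a * uinv v))))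
      = (\<Sum>x\<in>runits. \<chi> ((u * v) * x) * ((\<tau> u * \<psi> (u + ((u * v) * x) * uinv u)) *
            (\<tau> v * \<psi> (v + ((u * v) * x) * uinv v))))"
      using sum_reindex_unit[OF uv, of "\<lambda>a. \<chi> a * ((\<tau> u * \<psi> (u + a * uinv u)) * (\<tau> v * \<psi> (v + a * uinv v)))"]
      by simp
    also have "\<dots> = (\<Sum>x\<in>runits. \<chi> x * ((\<gamma> u * \<psi> (u * (1 + x))) * (\<gamma> v * \<psi> (v * (1 + x)))))"
    proof (rule sum.cong[OF refl])
      fix x :: 'a assume x: "x \<in> runits"
      have e1: "((u * v) * x) * uinv u = v * x" using uinv_mult[OF u]
        by (metis mult.assoc mult.commute mult_1_right)
      have e2: "((u * v) * x) * uinv v = u * x" using uinv_mult[OF v]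
        by (metis mult.assoc mult.commute mult_1_right)
      have A: "\<psi> (u + v * x) * \<psi> (v + u * x) = \<psi> (u * (1 + x)) * \<psi> (v * (1 + x))"
      proof -
        have "\<psi> (u + v * x) * \<psi> (v + u * x) = \<psi> ((u + v * x) + (v + u * x))" by (simp add: psi_add)
        also have "(u + v * x) + (v + u * x) = u * (1 + x) + v * (1 + x)" by (simp add: algebra_simps)
        finally show ?thesis by (simp add: psi_add)
      qed
      have B: "\<chi> ((u * v) * x) = \<chi> u * \<chi> v * \<chi> x"
        using mult_char_mult[OF chi uv x] mult_char_mult[OF chi u v] by simp
      have "\<chi> ((u * v) * x) * ((\<tau> u * \<psi> (u + ((u * v) * x) * uinv u)) *
            (\<tau> v * \<psi> (v + ((u * v) * x) * uinv v))) =
         \<chi> ((u * v) * x) * (\<tau> u * \<psi> (u + v * x) * (\<tau> v * \<psi> (v + u * x)))"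
        unfolding e1 e2 ..
      also have "\<dots> = (\<chi> x * (\<chi> u * \<tau> u) * (\<chi> v * \<tau> v)) * (\<psi> (u + v * x) * \<psi> (v + u * x))"
        unfolding B by (simp add: ac_simps)
      also have "\<dots> = (\<chi> x * (\<chi> u * \<tau> u) * (\<chi> v * \<tau> v)) * (\<psi> (u * (1 + x)) * \<psi> (v * (1 + x)))"
        unfolding A ..
      also have "\<dots> = \<chi> x * ((\<gamma> u * \<psi> (u * (1 + x))) * (\<gamma> v * \<psi> (v * (1 + x))))"
        unfolding \<gamma>_def by (simp add: ac_simps)
      finally show "\<chi> ((u * v) * x) * ((\<tau> u * \<psi> (u + ((u * v) * x) * uinv u)) *
            (\<tau> v * \<psi> (v + ((u * v) * x) * uinv v))) =
          \<chi> x * ((\<gamma> u * \<psi> (u * (1 + x))) * (\<gamma> v * \<psi> (v * (1 + x))))" .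
    qed
    finally show "(\<Sum>a\<in>runits. \<chi> a * ((\<tau> u * \<psi> (u + a * uinv u)) * (\<tau> v * \<psi> (v + a * uinv v))))
      = (\<Sum>x\<in>runits. \<chi> x * ((\<gamma> u * \<psi> (u * (1 + x))) * (\<gamma> v * \<psi> (v * (1 + x)))))" .
  qed
  also have "\<dots> = (\<Sum>x\<in>runits. \<Sum>u\<in>runits. \<Sum>v\<in>runits.
          \<chi> x * ((\<gamma> u * \<psi> (u * (1 + x))) * (\<gamma> v * \<psi> (v * (1 + x)))))"
    apply (rule trans[OF sum.cong[OF refl]])
     apply (rule sum.swap)
    apply (rule sum.swap)
    done
  also have "\<dots> = (\<Sum>x\<in>runits. \<chi> x * (T (1 + x))\<^sup>2)"
    unfolding T_def power2_eq_square
    by (subst sum_product, subst sum_distrib_left, subst sum_distrib_left, rule refl)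
  also have "\<dots> = (\<Sum>x\<in>runits. if 1 + x \<in> runits then \<chi> x * (\<gamma> (uinv (1 + x)))\<^sup>2 * G\<^sup>2 else 0)"
    by (rule sum.cong[OF refl]) (simp add: Tval power_mult_distrib)
  also have "\<dots> = (\<Sum>x\<in>{x\<in>runits. 1 + x \<in> runits}. \<chi> x * (\<gamma> (uinv (1 + x)))\<^sup>2 * G\<^sup>2)"
    by (rule sum.inter_filter[symmetric]) simp
  also have "\<dots> = (\<Sum>x\<in>{x\<in>runits. 1 + x \<in> runits}. \<chi> x * (\<gamma> (uinv (1 + x)))\<^sup>2) * G\<^sup>2"
    by (simp add: sum_distrib_right)
  also have "(\<Sum>x\<in>{x\<in>runits. 1 + x \<in> runits}. \<chi> x * (\<gamma> (uinv (1 + x)))\<^sup>2) =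
      jacobi_sum \<chi> (\<lambda>u. \<chi> u * (\<tau> u)\<^sup>2)"
    unfolding jacobi_sum_def
  proof (rule sum.reindex_bij_witness[where j = "\<lambda>x. (x * uinv (1 + x), uinv (1 + x))"
        and i = "\<lambda>(u, v). u * uinv v"])
    fix x assume "x \<in> {x \<in> runits. 1 + (x::'a) \<in> runits}"
    then have x: "x \<in> runits" and x1: "1 + x \<in> runits" by auto
    define w where "w = uinv (1 + x)"
    have w: "w \<in> runits" unfolding w_def using uinv_runits[OF x1] .
    have w1: "w * (1 + x) = 1" unfolding w_def using uinv_mult2[OF x1] .
    show "(case (x * uinv (1 + x), uinv (1 + x)) of (u, v) \<Rightarrow> u * uinv v) = x"
      using uinv_uinv[OF x1] w1 unfolding w_def[symmetric] by (simp add: mult.assoc)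
    have "x * w + w = 1" using w1 by (simp add: algebra_simps)
    then show "(x * uinv (1 + x), uinv (1 + x)) \<in> {(u, v). u \<in> runits \<and> v \<in> runits \<and> u + v = 1}"
      using runits_mult[OF x w] w unfolding w_def by simp
    have "\<chi> (x * w) * (\<chi> w * (\<tau> w)\<^sup>2) = \<chi> x * (\<gamma> w)\<^sup>2"
      using mult_char_mult[OF chi x w] unfolding \<gamma>_def by (simp add: power2_eq_square)
    then show "(case (x * uinv (1 + x), uinv (1 + x)) of (u, v) \<Rightarrow> \<chi> u * (\<chi> v * (\<tau> v)\<^sup>2)) =
        \<chi> x * (\<gamma> (uinv (1 + x)))\<^sup>2" unfolding w_def by simp
  next
    fix b assume "b \<in> {(u, v). u \<in> runits \<and> v \<in> runits \<and> u + v = (1::'a)}"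
    then obtain u v where b: "b = (u, v)" and u: "u \<in> runits" and v: "v \<in> runits" and uv: "u + v = 1"
      by blast
    have vi: "uinv v \<in> runits" using uinv_runits[OF v] .
    have e: "1 + u * uinv v = uinv v"
    proof -
      have "1 + u * uinv v = (v + u) * uinv v" using uinv_mult[OF v] by (simp add: algebra_simps)
      then show ?thesis using uv by (simp add: add.commute)
    qed
    show "((case b of (u, v) \<Rightarrow> u * uinv v) * uinv (1 + (case b of (u, v) \<Rightarrow> u * uinv v)),
           uinv (1 + (case b of (u, v) \<Rightarrow> u * uinv v))) = b"
      unfolding b using e uinv_uinv[OF v] uinv_mult2[OF v] by (simp add: mult.assoc)
    show "(case b of (u, v) \<Rightarrow> u * uinv v) \<in> {x \<in> runits. 1 + x \<in> runits}"
      unfolding b using e runits_mult[OF u vi] vi by simp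
  qed
  finally show ?thesis unfolding \<gamma>_def G_def by (simp add: mult.commute)
qed

end



definition issq :: "'a::comm_ring_1 \<Rightarrow> bool" where
  "issq w \<longleftrightarrow> (\<exists>v. w - v * v \<in> maxid)"

lemma fiber_sum:
  fixes f :: "'b \<Rightarrow> 'c::comm_semiring_1"
  assumes "finite A" "finite B" "\<forall>x\<in>A. \<phi> x \<in> B"
  shows "(\<Sum>x\<in>A. f (\<phi> x)) = (\<Sum>z\<in>B. of_nat (card {x\<in>A. \<phi> x = z}) * f z)"
proof -
  have "(\<Sum>z\<in>B. of_nat (card {x\<in>A. \<phi> x = z}) * f z) = (\<Sum>z\<in>B. \<Sum>x\<in>{x\<in>A. \<phi> x = z}. f z)"
    by simp
  also have "\<dots> = (\<Sum>z\<in>B. \<Sum>x\<in>A. if \<phi> x = z then f (\<phi> x) else 0)"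
    by (rule sum.cong[OF refl], subst sum.inter_filter[OF assms(1)]) (auto intro: sum.cong)
  also have "\<dots> = (\<Sum>x\<in>A. \<Sum>z\<in>B. if \<phi> x = z then f (\<phi> x) else 0)" by (rule sum.swap)
  also have "\<dots> = (\<Sum>x\<in>A. f (\<phi> x))"
    using assms(2,3) by (simp add: sum.delta)
  finally show ?thesis by simp
qed

context lring
begin

lemma issq_cong: assumes "a - z \<in> M" shows "issq a \<longleftrightarrow> issq z"
proof -
  have "\<And>v. a - v * v \<in> M \<longleftrightarrow> z - v * v \<in> M"
  proof -
    fix v
    show "a - v * v \<in> M \<longleftrightarrow> z - v * v \<in> M"
    proof
      assume "a - v * v \<in> M"
      then have "(a - v * v) - (a - z) \<in> M" using ideal_diff[OF M_ideal] assms by blast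
      then show "z - v * v \<in> M" by simp
    next
      assume "z - v * v \<in> M"
      then have "(z - v * v) + (a - z) \<in> M" using ideal_add[OF M_ideal] assms by blast
      then show "a - v * v \<in> M" by simp
    qed
  qed
  then show ?thesis unfolding issq_def by blast
qed

lemma sq_issq: "issq ((x::'a) * x)" unfolding issq_def using ideal_0[OF M_ideal] by (intro exI[of _ x]) simp

context
  assumes two: "(2::'a) \<in> U"
begin

lemma sq_one: assumes "x * x = (1::'a)" shows "x = 1 \<or> x = -1"
proof -
  have e: "(x - 1) * (x + 1) = 0" using assms by (simp add: algebra_simps)
  show ?thesis
  proof (cases "x - 1 \<in> M")
    case False
    then have "x - 1 \<in> U" using nonunit_in_M by blast
    then have "x + 1 = 0" using unit_zero e by blast
    then show ?thesis by (simp add: eq_neg_iff_add_eq_0)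
  next
    case True
    have "x + 1 \<notin> M"
    proof
      assume "x + 1 \<in> M"
      then have "(x + 1) - (x - 1) \<in> M" using ideal_diff[OF M_ideal] True by blast
      then have "(2::'a) \<in> M" by simp
      then show False using M_no_unit two by blast
    qed
    then have "x + 1 \<in> U" using in_M_iff by blast
    then have "x - 1 = 0" using unit_zero[of "x + 1" "x - 1"] e by (simp add: mult.commute)
    then show ?thesis by simp
  qed
qed

lemma sqrt_one_plus: assumes "m \<in> M" shows "\<exists>s. s * s = 1 + m"
proof -
  let ?P = "{t::'a. t - 1 \<in> M}"
  have sub: "(\<lambda>t. t * t) ` ?P \<subseteq> ?P"
  proof
    fix y assume "y \<in> (\<lambda>t. t * t) ` ?P"
    then obtain t where t: "t - 1 \<in> M" "y = t * t" by blast
    have "t * t - 1 = (t - 1) * (t + 1)" by (simp add: algebra_simps)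
    then show "y \<in> ?P" using ideal_mult2[OF M_ideal t(1)] t(2) by simp
  qed
  have inj: "inj_on (\<lambda>t. t * t) ?P"
  proof
    fix t t' assume t: "t \<in> ?P" and t': "t' \<in> ?P" and eq: "t * t = t' * t'"
    have eq2: "t + t' = 2 + ((t - 1) + (t' - 1))" by simp
    have "(t - 1) + (t' - 1) \<in> M" using t t' ideal_add[OF M_ideal] by blast
    then have u: "t + t' \<in> U" unfolding eq2 by (rule unit_add_M[OF two])
    have "(t + t') * (t - t') = 0" using eq by (simp add: algebra_simps)
    then have "t - t' = 0" using unit_zero[OF u] by blast
    then show "t = t'" by simp
  qed
  have "(\<lambda>t. t * t) ` ?P = ?P" by (rule endo_inj_surj[OF _ sub inj]) simp
  moreover have "1 + m \<in> ?P" using assms by simp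
  ultimately have "1 + m \<in> (\<lambda>t. t * t) ` ?P" by simp
  then obtain t where "1 + m = t * t" by blast
  then show ?thesis by metis
qed

lemma issq_sqrt: fixes w :: 'a assumes w: "w \<in> U" "issq w" shows "\<exists>x. x * x = w"
proof -
  obtain v where v: "w - v * v \<in> M" using w(2) unfolding issq_def by blast
  have vu: "v \<in> U"
  proof (rule ccontr)
    assume "v \<notin> U"
    then have "v * v \<in> M" using nonunit_in_M ideal_mult2[OF M_ideal] by blast
    then have "(w - v * v) + v * v \<in> M" using ideal_add[OF M_ideal] v by blast
    then show False using M_no_unit w(1) by simp
  qed
  define iv where "iv = uinv v"
  have iv: "v * iv = 1" unfolding iv_def using uinv_mult[OF vu] .
  have "iv * iv * (w - v * v) \<in> M" using ideal_mult[OF M_ideal v] .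
  then obtain s where s: "s * s = 1 + iv * iv * (w - v * v)" using sqrt_one_plus by blast
  have "1 + iv * iv * (w - v * v) = iv * iv * w"
  proof -
    have "iv * iv * (v * v) = (v * iv) * (v * iv)" by (simp add: ac_simps)
    then have "iv * iv * (v * v) = 1" using iv by simp
    then show ?thesis by (simp add: algebra_simps)
  qed
  then have ss: "s * s = iv * iv * w" using s by simp
  have "(v * s) * (v * s) = (v * v) * (s * s)" by (simp add: ac_simps)
  also have "\<dots> = (v * v) * (iv * iv * w)" using ss by simp
  also have "\<dots> = (v * iv) * (v * iv) * w" by (simp add: ac_simps)
  finally have "(v * s) * (v * s) = (v * iv) * (v * iv) * w" .
  then have "(v * s) * (v * s) = w" using iv by simp
  then show ?thesis by blast
qed

lemma card_sqrt:
  fixes w :: 'a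
  assumes w: "w \<in> U"
  shows "card {x\<in>U. x * x = w} = (if issq w then 2 else 0)"
proof (cases "issq w")
  case False
  have "{x\<in>U. x * x = w} = {}"
  proof (rule ccontr)
    assume "{x\<in>U. x * x = w} \<noteq> {}"
    then obtain x where "x * x = w" by blast
    then show False using False sq_issq by blast
  qed
  then show ?thesis using False by simp
next
  case True
  obtain x0 where x0: "x0 * x0 = w" using issq_sqrt[OF w True] by blast
  have x0u: "x0 \<in> U"
  proof (rule ccontr)
    assume "x0 \<notin> U"
    then have "x0 * x0 \<in> M" using nonunit_in_M ideal_mult2[OF M_ideal] by blast
    then show False using M_no_unit w x0 by simp
  qed
  have "{x\<in>U. x * x = w} = {x0, - x0}"
  proof
    show "{x0, - x0} \<subseteq> {x\<in>U. x * x = w}" using x0 x0u neg_runits by auto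
    show "{x\<in>U. x * x = w} \<subseteq> {x0, - x0}"
    proof
      fix x assume "x \<in> {x\<in>U. x * x = w}"
      then have x: "x \<in> U" "x * x = x0 * x0" using x0 by auto
      define y where "y = x * uinv x0"
      have "y * y = (x * x) * (uinv x0 * uinv x0)" unfolding y_def by (simp add: ac_simps)
      also have "\<dots> = (x0 * uinv x0) * (x0 * uinv x0)" using x(2) by (simp add: ac_simps)
      finally have "y * y = 1" using uinv_mult[OF x0u] by simp
      then have "y = 1 \<or> y = -1" by (rule sq_one)
      moreover have "x = y * x0" unfolding y_def using uinv_mult2[OF x0u] by (simp add: mult.assoc)
      ultimately show "x \<in> {x0, - x0}" by auto
    qed
  qed
  moreover have "x0 \<noteq> - x0"
  proof
    assume "x0 = - x0"
    then have "2 * x0 = 0" by (metis add.right_inverse mult_2)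
    then have "x0 = 0" using unit_zero[OF two] by blast
    then show False using x0u M_no_unit ideal_0[OF M_ideal] by blast
  qed
  ultimately show ?thesis using True by simp
qed

lemma issq_mult1: fixes a b :: 'a assumes "issq a" "issq b" "a \<in> U" "b \<in> U" shows "issq (a * b)"
proof -
  obtain x where "x * x = a" using issq_sqrt[OF assms(3,1)] by blast
  moreover obtain y where "y * y = b" using issq_sqrt[OF assms(4,2)] by blast
  ultimately have "a * b = (x * y) * (x * y)" by (simp add: ac_simps)
  then show ?thesis using sq_issq by simp
qed

lemma issq_mult2: fixes a b :: 'a assumes "issq a" "\<not> issq b" "a \<in> U" "b \<in> U" shows "\<not> issq (a * b)"
proof
  assume ab: "issq (a * b)"
  obtain x where x: "x * x = a" using issq_sqrt[OF assms(3,1)] by blast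
  obtain z where z: "z * z = a * b" using issq_sqrt[OF runits_mult[OF assms(3,4)] ab] by blast
  have xu: "x \<in> U"
  proof (rule ccontr)
    assume "x \<notin> U"
    then have "x * x \<in> M" using nonunit_in_M ideal_mult2[OF M_ideal] by blast
    then show False using M_no_unit assms(3) x by simp
  qed
  define q where "q = z * uinv x"
  have "q * q = (z * z) * (uinv x * uinv x)" unfolding q_def by (simp add: ac_simps)
  also have "\<dots> = b * ((x * uinv x) * (x * uinv x))" using z by (simp add: x[symmetric] ac_simps)
  finally have "q * q = b" using uinv_mult[OF xu] by simp
  then have "issq b" using sq_issq[of q] by simp
  then show False using assms(2) by blast
qed

lemma card_units_sq: "card (U :: 'a set) = 2 * card {w\<in>U. issq w}"
proof -
  have "card (U :: 'a set) = (\<Sum>x\<in>(U :: 'a set). (1::nat))" by simp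
  also have "\<dots> = (\<Sum>w\<in>U. of_nat (card {x\<in>U. x * x = w}) * 1)"
    by (rule fiber_sum[of U U "\<lambda>x. x * x" "\<lambda>_. 1::nat"]) (auto simp: runits_mult)
  also have "\<dots> = (\<Sum>w\<in>U. if issq w then 2 else 0)"
    by (rule sum.cong[OF refl]) (simp add: card_sqrt)
  also have "\<dots> = (\<Sum>w\<in>{w\<in>U. issq w}. 2)" by (rule sum.inter_filter[symmetric]) simp
  also have "\<dots> = 2 * card {w\<in>U. issq w}" by simp
  finally show ?thesis .
qed

lemma issq_mult3: fixes a b :: 'a assumes "\<not> issq a" "\<not> issq b" "a \<in> U" "b \<in> U" shows "issq (a * b)"
proof -
  let ?Sq = "{w\<in>U. issq w}" and ?N = "{w\<in>U. \<not> issq (w::'a)}"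
  have cN: "card ?N = card ?Sq"
  proof -
    have "U = ?Sq \<union> ?N" by blast
    moreover have "?Sq \<inter> ?N = {}" by blast
    ultimately have "card (U :: 'a set) = card ?Sq + card ?N"
      by (metis card_Un_disjoint finite)
    then show ?thesis using card_units_sq by simp
  qed
  have img: "(\<lambda>w. a * w) ` ?Sq \<subseteq> ?N"
  proof
    fix y assume "y \<in> (\<lambda>w. a * w) ` ?Sq"
    then obtain w where w: "w \<in> U" "issq w" "y = a * w" by blast
    then show "y \<in> ?N" using issq_mult2[OF w(2) assms(1) w(1) assms(3)] runits_mult[OF assms(3) w(1)]
      by (simp add: mult.commute)
  qed
  have inj: "inj_on (\<lambda>w. a * w) ?Sq" using unit_cancel[OF assms(3)] by (auto intro: inj_onI)
  have "card ((\<lambda>w. a * w) ` ?Sq) = card ?N" using card_image[OF inj] cN by simp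
  then have "(\<lambda>w. a * w) ` ?Sq = ?N" using img by (intro card_subset_eq) simp_all
  then obtain w where w: "w \<in> U" "issq w" "b = a * w" using assms(2,4) by blast
  have "issq (a * a)" by (rule sq_issq)
  then have "issq ((a * a) * w)" using issq_mult1 w runits_mult[OF assms(3) assms(3)] by blast
  then show ?thesis using w(3) by (simp add: ac_simps)
qed

lemma exists_nonsq: "\<exists>u\<in>U. \<not> issq (u::'a)"
proof -
  let ?Sq = "{w\<in>U. issq w}"
  have o: "(1::'a) \<in> U" by simp
  have "finite U" by simp
  then have c0: "card U > 0" using o card_gt_0_iff by blast
  have "card ?Sq < card U" using card_units_sq c0 by linarith
  then have "?Sq \<noteq> U" by auto
  then show ?thesis by blast
qed

lemma quad_issq: "u \<in> U \<Longrightarrow> quad_char u = (if issq u then 1 else -1)"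
  unfolding quad_char_def issq_def by simp

lemma quad_mult_char: "mult_char (quad_char :: 'a \<Rightarrow> complex)"
  unfolding mult_char_def
proof (intro conjI ballI allI impI)
  fix u v :: 'a assume u: "u \<in> U" and v: "v \<in> U"
  have uv: "u * v \<in> U" using runits_mult[OF u v] .
  have "issq (u * v) \<longleftrightarrow> (issq u \<longleftrightarrow> issq v)"
  proof (cases "issq u"; cases "issq v")
    assume "issq u" "issq v" then show ?thesis using issq_mult1[OF _ _ u v] by blast
  next
    assume "issq u" "\<not> issq v" then show ?thesis using issq_mult2[OF _ _ u v] by blast
  next
    assume "\<not> issq u" "issq v" then show ?thesis using issq_mult2[OF _ _ v u] by (simp add: mult.commute)
  next
    assume "\<not> issq u" "\<not> issq v" then show ?thesis using issq_mult3[OF _ _ u v] by blast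
  qed
  then show "quad_char (u * v) = quad_char u * quad_char v"
    unfolding quad_issq[OF u] quad_issq[OF v] quad_issq[OF uv] by (cases "issq u"; cases "issq v") simp_all
next
  fix u :: 'a assume "u \<in> U"
  then show "quad_char u \<noteq> 0" unfolding quad_issq[OF \<open>u \<in> U\<close>] by simp
next
  fix x :: 'a assume "x \<notin> U"
  then show "quad_char x = 0" unfolding quad_char_def by simp
qed

lemma quad_sq: "u \<in> U \<Longrightarrow> quad_char u * quad_char u = (1::complex)"
  by (simp add: quad_issq)

lemma quad_nontriv: "\<exists>u0\<in>U. (quad_char u0 :: complex) \<noteq> 1"
proof -
  obtain u where "u \<in> U" "\<not> issq u" using exists_nonsq by blast
  then show ?thesis using quad_issq[of u] by force
qed

end
end



definition F0 :: "('a::comm_ring_1 \<Rightarrow> complex) \<Rightarrow> ('a \<Rightarrow> complex) \<Rightarrow> 'a \<Rightarrow> complex" where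
  "F0 \<psi> \<tau> a = (\<Sum>p\<in>{p\<in>runits \<times> runits. fst p + snd p \<in> maxid}.
     \<tau> (fst p) * \<tau> (snd p) * \<psi> (fst p + snd p + a * (uinv (fst p) + uinv (snd p))))"

lemma uinv_add: assumes "p \<in> runits" "q \<in> runits"
  shows "uinv p + uinv q = (p + q) * uinv (p * q)"
proof -
  have "(p + q) * uinv (p * q) = (p * uinv p) * uinv q + (q * uinv q) * uinv p"
    unfolding uinv_mult_distrib[OF assms] by (simp add: algebra_simps)
  then show ?thesis using uinv_mult[OF assms(1)] uinv_mult[OF assms(2)] by (simp add: add.commute)
qed

lemma uinv_neg: assumes "z \<in> runits" shows "uinv (- z) = - uinv z"
  using uinv_unique[of "- z" "- uinv z"] uinv_mult[OF assms] by simp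

context frob
begin

lemma cond_annM:
  assumes a: "a \<in> U" and u: "u \<in> U" and v: "v \<in> U"
  shows "(\<forall>y\<in>annM. (a * (uinv u + uinv v)) * y = 0) \<longleftrightarrow> u + v \<in> M"
proof -
  have w: "uinv u + uinv v = (u + v) * uinv (u * v)" by (rule uinv_add[OF u v])
  have uv: "u * v \<in> U" using runits_mult[OF u v] .
  show ?thesis
  proof
    assume h: "\<forall>y\<in>annM. (a * (uinv u + uinv v)) * y = 0"
    show "u + v \<in> M"
    proof (rule ccontr)
      assume "u + v \<notin> M"
      then have "u + v \<in> U" using in_M_iff by blast
      then have "a * (uinv u + uinv v) \<in> U" unfolding w
        using runits_mult[OF a runits_mult[OF _ uinv_runits[OF uv]]] by blast
      moreover obtain y :: 'a where "y \<in> annM" "y \<noteq> 0" using annM_ne0 ideal_0[OF annM_ideal] by blast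
      ultimately show False using h unit_zero by blast
    qed
  next
    assume "u + v \<in> M"
    then have "a * (uinv u + uinv v) \<in> M" unfolding w
      using ideal_mult[OF M_ideal] ideal_mult2[OF M_ideal] by blast
    then show "\<forall>y\<in>annM. (a * (uinv u + uinv v)) * y = 0" unfolding annM_def by blast
  qed
qed

lemma stepA:
  fixes \<chi> \<tau> :: "'a \<Rightarrow> complex"
  assumes chi: "mult_char \<chi>" and hchi: "\<forall>v\<in>annM. \<chi> (1 + v) = 1" and M0: "M \<noteq> {0}"
  shows "(\<Sum>a\<in>U. \<chi> a * (kloosterman \<psi> \<tau> a)\<^sup>2) = (\<Sum>a\<in>U. \<chi> a * F0 \<psi> \<tau> a)"
proof -
  let ?K = "kloosterman \<psi> \<tau>"
  let ?S = "(\<Sum>a\<in>U. \<chi> a * (?K a)\<^sup>2)"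
  let ?Q = "{p\<in>U \<times> U. fst p + snd p \<in> M}"
  have one: "\<And>s. s \<in> annM \<Longrightarrow> ?S = (\<Sum>a\<in>U. \<chi> a * (?K ((1 + s) * a))\<^sup>2)"
  proof -
    fix s :: 'a assume s: "s \<in> annM"
    have su: "1 + s \<in> U" using s annM_sub_M[OF M0] one_plus_M by blast
    have "?S = (\<Sum>a\<in>U. \<chi> ((1 + s) * a) * (?K ((1 + s) * a))\<^sup>2)"
      using sum_reindex_unit[OF su, of "\<lambda>a. \<chi> a * (?K a)\<^sup>2"] by simp
    also have "\<dots> = (\<Sum>a\<in>U. \<chi> a * (?K ((1 + s) * a))\<^sup>2)"
      by (rule sum.cong[OF refl]) (simp add: mult_char_mult[OF chi su] hchi s)
    finally show "?S = (\<Sum>a\<in>U. \<chi> a * (?K ((1 + s) * a))\<^sup>2)" .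
  qed
  have three: "\<And>a. a \<in> U \<Longrightarrow> (\<Sum>s\<in>annM. (?K ((1 + s) * a))\<^sup>2) = of_nat (card (annM::'a set)) * F0 \<psi> \<tau> a"
  proof -
    fix a :: 'a assume a: "a \<in> U"
    let ?g = "\<lambda>u v. \<tau> u * \<tau> v * \<psi> (u + v + a * (uinv u + uinv v))"
    have "(\<Sum>s\<in>annM. (?K ((1 + s) * a))\<^sup>2) =
        (\<Sum>s\<in>annM. \<Sum>u\<in>U. \<Sum>v\<in>U. ?g u v * \<psi> ((a * (uinv u + uinv v)) * s))"
    proof (rule sum.cong[OF refl])
      fix s :: 'a assume s: "s \<in> annM"
      have "(?K ((1 + s) * a))\<^sup>2 = (\<Sum>u\<in>U. \<Sum>v\<in>U. (\<tau> u * \<psi> (u + ((1 + s) * a) * uinv u)) *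
            (\<tau> v * \<psi> (v + ((1 + s) * a) * uinv v)))"
        unfolding kloosterman_def power2_eq_square by (rule sum_product)
      also have "\<dots> = (\<Sum>u\<in>U. \<Sum>v\<in>U. ?g u v * \<psi> ((a * (uinv u + uinv v)) * s))"
      proof (rule sum.cong[OF refl], rule sum.cong[OF refl])
        fix u v :: 'a
        have "(u + ((1 + s) * a) * uinv u) + (v + ((1 + s) * a) * uinv v) =
            (u + v + a * (uinv u + uinv v)) + (a * (uinv u + uinv v)) * s"
          by (simp add: algebra_simps)
        then have "\<psi> (u + ((1 + s) * a) * uinv u) * \<psi> (v + ((1 + s) * a) * uinv v) =
            \<psi> (u + v + a * (uinv u + uinv v)) * \<psi> ((a * (uinv u + uinv v)) * s)"
          by (metis psi_add)
        then show "(\<tau> u * \<psi> (u + ((1 + s) * a) * uinv u)) * (\<tau> v * \<psi> (v + ((1 + s) * a) * uinv v)) =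
            ?g u v * \<psi> ((a * (uinv u + uinv v)) * s)"
          by (simp add: ac_simps)
      qed
      finally show "(?K ((1 + s) * a))\<^sup>2 = (\<Sum>u\<in>U. \<Sum>v\<in>U. ?g u v * \<psi> ((a * (uinv u + uinv v)) * s))" .
    qed
    also have "\<dots> = (\<Sum>u\<in>U. \<Sum>v\<in>U. \<Sum>s\<in>annM. ?g u v * \<psi> ((a * (uinv u + uinv v)) * s))"
      apply (rule trans[OF sum.swap])
      apply (rule sum.cong[OF refl])
      apply (rule sum.swap)
      done
    also have "\<dots> = (\<Sum>u\<in>U. \<Sum>v\<in>U. if u + v \<in> M then of_nat (card (annM::'a set)) * ?g u v else 0)"
    proof (rule sum.cong[OF refl], rule sum.cong[OF refl])
      fix u v :: 'a assume u: "u \<in> U" and v: "v \<in> U"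
      have "(\<Sum>s\<in>annM. ?g u v * \<psi> ((a * (uinv u + uinv v)) * s)) =
          ?g u v * (\<Sum>s\<in>annM. \<psi> ((a * (uinv u + uinv v)) * s))" by (simp add: sum_distrib_left)
      also have "\<dots> = ?g u v * (if u + v \<in> M then of_nat (card (annM::'a set)) else 0)"
        unfolding Lorth[OF annM_ideal] cond_annM[OF a u v] ..
      finally show "(\<Sum>s\<in>annM. ?g u v * \<psi> ((a * (uinv u + uinv v)) * s)) =
          (if u + v \<in> M then of_nat (card (annM::'a set)) * ?g u v else 0)" by simp
    qed
    also have "\<dots> = (\<Sum>p\<in>U \<times> U. if fst p + snd p \<in> M then of_nat (card (annM::'a set)) * ?g (fst p) (snd p) else 0)"
      by (simp add: sum.cartesian_product case_prod_beta)
    also have "\<dots> = (\<Sum>p\<in>?Q. of_nat (card (annM::'a set)) * ?g (fst p) (snd p))"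
      by (rule sum.inter_filter[symmetric]) simp
    also have "\<dots> = of_nat (card (annM::'a set)) * F0 \<psi> \<tau> a"
      unfolding F0_def by (simp add: sum_distrib_left)
    finally show "(\<Sum>s\<in>annM. (?K ((1 + s) * a))\<^sup>2) = of_nat (card (annM::'a set)) * F0 \<psi> \<tau> a" .
  qed
  have "of_nat (card (annM::'a set)) * ?S = (\<Sum>s\<in>(annM::'a set). ?S)" by simp
  also have "\<dots> = (\<Sum>s\<in>annM. \<Sum>a\<in>U. \<chi> a * (?K ((1 + s) * a))\<^sup>2)"
    by (rule sum.cong[OF refl]) (rule one)
  also have "\<dots> = (\<Sum>a\<in>U. \<chi> a * (\<Sum>s\<in>annM. (?K ((1 + s) * a))\<^sup>2))"
    by (subst sum.swap) (simp add: sum_distrib_left)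
  also have "\<dots> = (\<Sum>a\<in>U. \<chi> a * (of_nat (card (annM::'a set)) * F0 \<psi> \<tau> a))"
    by (rule sum.cong[OF refl]) (simp add: three)
  also have "\<dots> = of_nat (card (annM::'a set)) * (\<Sum>a\<in>U. \<chi> a * F0 \<psi> \<tau> a)"
    by (simp add: sum_distrib_left ac_simps)
  finally have eq: "of_nat (card (annM::'a set)) * ?S = of_nat (card (annM::'a set)) * (\<Sum>a\<in>U. \<chi> a * F0 \<psi> \<tau> a)" .
  have "card (annM::'a set) \<noteq> 0" using ideal_0[OF annM_ideal] by (simp add: card_eq_0_iff) blast
  then show ?thesis using eq by simp
qed

end



context frob
begin

lemma in_annM_iff: "c \<in> (annM::'a set) \<longleftrightarrow> (\<forall>y\<in>M. c * y = 0)"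
  unfolding annM_def by (auto simp: mult.commute)

lemma stepB:
  fixes \<tau> :: "'a \<Rightarrow> complex"
  assumes tau: "mult_char \<tau>" and htau: "\<forall>v\<in>annM. \<tau> (1 + v) = 1"
    and M0: "M \<noteq> {0}" and two: "(2::'a) \<in> U" and a: "a \<in> U"
  shows "F0 \<psi> \<tau> a = \<tau> (-1) * of_nat (card (UNIV::'a set)) * \<tau> a * (1 + quad_char a)"
proof -
  let ?Q = "{p\<in>U \<times> U. fst p + snd p \<in> M}"
  define h where "h = uinv (2::'a)"
  have h2: "h * 2 = 1" unfolding h_def using uinv_mult2[OF two] .
  define c where "c = (\<lambda>z. 2 * (1 - a * uinv z))"
  define H where "H = (\<lambda>y z. \<tau> (-1) * \<tau> z * \<psi> (y * c z))"
  have Hsq: "\<And>x y. x \<in> U \<Longrightarrow> y \<in> M \<Longrightarrow> x * x - y * y \<in> U"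
  proof -
    fix x y :: 'a assume x: "x \<in> U" and y: "y \<in> M"
    have "x * x + - (y * y) \<in> U"
      using unit_add_M[OF runits_mult[OF x x]] ideal_neg[OF M_ideal ideal_mult2[OF M_ideal y]] by blast
    then show "x * x - y * y \<in> U" by simp
  qed
  have B1: "F0 \<psi> \<tau> a = (\<Sum>p\<in>U \<times> M. H (snd p) (fst p * fst p - snd p * snd p))"
    unfolding F0_def
  proof (rule sym, rule sum.reindex_bij_witness[where j = "\<lambda>p. (fst p + snd p, snd p - fst p)"
        and i = "\<lambda>q. (h * (fst q - snd q), h * (fst q + snd q))"])
    fix p assume p: "p \<in> U \<times> M"
    obtain x y where xy: "p = (x, y)" and x: "x \<in> U" and y: "y \<in> M" using p by auto
    show "(h * (fst (fst p + snd p, snd p - fst p) - snd (fst p + snd p, snd p - fst p)),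
          h * (fst (fst p + snd p, snd p - fst p) + snd (fst p + snd p, snd p - fst p))) = p"
    proof -
      have "h * ((x + y) - (y - x)) = (h * 2) * x" by (simp add: algebra_simps mult_2)
      moreover have "h * ((x + y) + (y - x)) = (h * 2) * y" by (simp add: algebra_simps mult_2)
      ultimately show ?thesis unfolding xy using h2 by simp
    qed
    have u: "x + y \<in> U" using unit_add_M[OF x y] .
    have v: "y - x \<in> U" using unit_add_M[OF neg_runits[OF x] y] by (simp add: add.commute)
    have uvM: "(x + y) + (y - x) \<in> M" using ideal_add[OF M_ideal y y] by simp
    show "(fst p + snd p, snd p - fst p) \<in> ?Q" unfolding xy using u v uvM by simp
    define z where "z = x * x - y * y"
    have z: "z \<in> U" unfolding z_def using Hsq[OF x y] .
    have prod: "(x + y) * (y - x) = (-1) * z" unfolding z_def by (simp add: algebra_simps)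
    have tt: "\<tau> (x + y) * \<tau> (y - x) = \<tau> (-1) * \<tau> z"
      using mult_char_mult[OF tau u v] mult_char_mult[OF tau neg_one_runits z] prod by simp
    have "uinv (x + y) + uinv (y - x) = ((x + y) + (y - x)) * uinv ((-1) * z)"
      using uinv_add[OF u v] prod by simp
    also have "\<dots> = - ((2 * y) * uinv z)"
      using uinv_neg[OF z] by (simp add: algebra_simps mult_2)
    finally have ui: "uinv (x + y) + uinv (y - x) = - ((2 * y) * uinv z)" .
    have arg: "(x + y) + (y - x) + a * (uinv (x + y) + uinv (y - x)) = y * c z"
      unfolding ui c_def by (simp add: algebra_simps mult_2)
    show "\<tau> (fst (fst p + snd p, snd p - fst p)) * \<tau> (snd (fst p + snd p, snd p - fst p)) *
        \<psi> (fst (fst p + snd p, snd p - fst p) + snd (fst p + snd p, snd p - fst p) +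
          a * (uinv (fst (fst p + snd p, snd p - fst p)) + uinv (snd (fst p + snd p, snd p - fst p)))) =
        H (snd p) (fst p * fst p - snd p * snd p)"
      unfolding xy H_def using tt arg unfolding z_def by simp
  next
    fix q assume q: "q \<in> ?Q"
    obtain u v where uv: "q = (u, v)" and u: "u \<in> U" and v: "v \<in> U" and s: "u + v \<in> M" using q by auto
    have "h * (u - v) + h * (u + v) = (h * 2) * u" by (simp add: algebra_simps mult_2)
    moreover have "h * (u + v) - h * (u - v) = (h * 2) * v" by (simp add: algebra_simps mult_2)
    ultimately show "(fst (h * (fst q - snd q), h * (fst q + snd q)) + snd (h * (fst q - snd q), h * (fst q + snd q)),
        snd (h * (fst q - snd q), h * (fst q + snd q)) - fst (h * (fst q - snd q), h * (fst q + snd q))) = q"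
      unfolding uv using h2 by simp
    have hu: "h \<in> U" unfolding h_def using uinv_runits[OF two] .
    have "u - v = 2 * u + - (u + v)" by (simp add: algebra_simps mult_2)
    then have "u - v \<in> U" using unit_add_M[OF runits_mult[OF two u] ideal_neg[OF M_ideal s]] by simp
    then have "h * (u - v) \<in> U" using runits_mult[OF hu] by blast
    moreover have "h * (u + v) \<in> M" using ideal_mult[OF M_ideal s] .
    ultimately show "(h * (fst q - snd q), h * (fst q + snd q)) \<in> U \<times> M" unfolding uv by simp
  qed
  have B3: "\<And>y. y \<in> M \<Longrightarrow> (\<Sum>x\<in>U. H y (x * x - y * y)) = (\<Sum>z\<in>U. (1 + quad_char z) * H y z)"
  proof -
    fix y :: 'a assume y: "y \<in> M"
    have "(\<Sum>x\<in>U. H y (x * x - y * y)) = (\<Sum>z\<in>U. of_nat (card {x\<in>U. x * x - y * y = z}) * H y z)"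
      by (rule fiber_sum) (auto intro: Hsq[OF _ y])
    also have "\<dots> = (\<Sum>z\<in>U. (1 + quad_char z) * H y z)"
    proof (rule sum.cong[OF refl])
      fix z :: 'a assume z: "z \<in> U"
      have zy: "z + y * y \<in> U" using unit_add_M[OF z ideal_mult2[OF M_ideal y]] .
      have "{x\<in>U. x * x - y * y = z} = {x\<in>U. x * x = z + y * y}" by (auto simp: algebra_simps)
      then have "card {x\<in>U. x * x - y * y = z} = (if issq (z + y * y) then 2 else 0)"
        using card_sqrt[OF two zy] by simp
      moreover have "issq (z + y * y) \<longleftrightarrow> issq z"
        by (rule issq_cong) (simp add: ideal_mult2[OF M_ideal y])
      ultimately have "(of_nat (card {x\<in>U. x * x - y * y = z}) :: complex) = 1 + quad_char z"
        using quad_issq[OF two z] by simp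
      then show "of_nat (card {x\<in>U. x * x - y * y = z}) * H y z = (1 + quad_char z) * H y z" by simp
    qed
    finally show "(\<Sum>x\<in>U. H y (x * x - y * y)) = (\<Sum>z\<in>U. (1 + quad_char z) * H y z)" .
  qed
  define Z where "Z = {z\<in>U. 1 - a * uinv z \<in> annM}"
  have "F0 \<psi> \<tau> a = (\<Sum>y\<in>M. \<Sum>x\<in>U. H y (x * x - y * y))"
  proof -
    have "(\<Sum>p\<in>U \<times> M. H (snd p) (fst p * fst p - snd p * snd p)) = (\<Sum>x\<in>U. \<Sum>y\<in>M. H y (x * x - y * y))"
      by (simp add: sum.cartesian_product case_prod_beta)
    also have "\<dots> = (\<Sum>y\<in>M. \<Sum>x\<in>U. H y (x * x - y * y))" by (rule sum.swap)
    finally show ?thesis unfolding B1 .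
  qed
  also have "\<dots> = (\<Sum>y\<in>M. \<Sum>z\<in>U. (1 + quad_char z) * H y z)"
    by (rule sum.cong[OF refl]) (rule B3)
  also have "\<dots> = (\<Sum>z\<in>U. (1 + quad_char z) * \<tau> (-1) * \<tau> z * (\<Sum>y\<in>M. \<psi> (c z * y)))"
    unfolding H_def by (subst sum.swap) (simp add: sum_distrib_left ac_simps)
  also have "\<dots> = (\<Sum>z\<in>U. if z \<in> Z then (1 + quad_char z) * \<tau> (-1) * \<tau> z * of_nat (card M) else 0)"
  proof (rule sum.cong[OF refl])
    fix z :: 'a assume z: "z \<in> U"
    have "(\<forall>y\<in>M. c z * y = 0) \<longleftrightarrow> c z \<in> annM" using in_annM_iff by blast
    also have "\<dots> \<longleftrightarrow> z \<in> Z"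
    proof
      assume "c z \<in> annM"
      then have m1: "h * c z \<in> annM" using ideal_mult[OF annM_ideal] by blast
      have "h * c z = (h * 2) * (1 - a * uinv z)" unfolding c_def by (simp only: mult.assoc)
      then have "h * c z = 1 - a * uinv z" using h2 by simp
      with m1 show "z \<in> Z" unfolding Z_def using z by simp
    next
      assume "z \<in> Z"
      then show "c z \<in> annM" unfolding Z_def c_def using ideal_mult[OF annM_ideal] by blast
    qed
    finally have iff: "(\<forall>y\<in>M. c z * y = 0) \<longleftrightarrow> z \<in> Z" .
    show "(1 + quad_char z) * \<tau> (-1) * \<tau> z * (\<Sum>y\<in>M. \<psi> (c z * y)) =
        (if z \<in> Z then (1 + quad_char z) * \<tau> (-1) * \<tau> z * of_nat (card M) else 0)"
      unfolding Lorth[OF M_ideal] iff by simp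
  qed
  also have "\<dots> = (\<Sum>z\<in>Z. (1 + quad_char z) * \<tau> (-1) * \<tau> z * of_nat (card M))"
  proof -
    have UZ: "U \<inter> Z = Z" unfolding Z_def by blast
    show ?thesis by (subst sum.inter_restrict[symmetric]) (simp_all add: UZ)
  qed
  also have "\<dots> = (\<Sum>z\<in>Z. (1 + quad_char a) * \<tau> (-1) * \<tau> a * of_nat (card M))"
  proof (rule sum.cong[OF refl])
    fix z assume "z \<in> Z"
    then have z: "z \<in> U" and s: "1 - a * uinv z \<in> annM" unfolding Z_def by auto
    define s' where "s' = 1 - a * uinv z"
    have az: "a = z * (1 + - s')" unfolding s'_def using uinv_mult[OF z]
      by (simp add: algebra_simps)
    have ns: "- s' \<in> annM" using ideal_neg[OF annM_ideal] s unfolding s'_def by blast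
    have nsM: "- s' \<in> M" using ns annM_sub_M[OF M0] by blast
    have "\<tau> a = \<tau> z * \<tau> (1 + - s')" unfolding az using mult_char_mult[OF tau z one_plus_M[OF nsM]] .
    moreover have "\<tau> (1 + - s') = 1" using htau ns by blast
    ultimately have ta: "\<tau> a = \<tau> z" by simp
    have "a - z = z * (- s')" unfolding az by (simp add: algebra_simps)
    then have "a - z \<in> M" using ideal_mult[OF M_ideal nsM] by simp
    then have "issq a \<longleftrightarrow> issq z" by (rule issq_cong)
    then have "quad_char a = quad_char z" using quad_issq[OF two a] quad_issq[OF two z] by simp
    then show "(1 + quad_char z) * \<tau> (-1) * \<tau> z * of_nat (card M) =
        (1 + quad_char a) * \<tau> (-1) * \<tau> a * of_nat (card M)" using ta by simp
  qed
  also have "\<dots> = of_nat (card Z) * ((1 + quad_char a) * \<tau> (-1) * \<tau> a * of_nat (card M))" by simp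
  also have "card Z = card (annM::'a set)"
  proof (rule bij_betw_same_card[of "\<lambda>z. 1 - a * uinv z"], rule bij_betw_byWitness[where f' = "\<lambda>s. a * uinv (1 - s)"])
    show "\<forall>z\<in>Z. a * uinv (1 - (1 - a * uinv z)) = z"
    proof
      fix z assume "z \<in> Z"
      then have z: "z \<in> U" unfolding Z_def by auto
      have "a * uinv (1 - (1 - a * uinv z)) = a * uinv (a * uinv z)" by simp
      also have "\<dots> = a * (uinv a * z)" using uinv_mult_distrib[OF a uinv_runits[OF z]] uinv_uinv[OF z] by simp
      also have "\<dots> = z" using uinv_mult[OF a] by (simp add: mult.assoc[symmetric])
      finally show "a * uinv (1 - (1 - a * uinv z)) = z" .
    qed
    show "\<forall>s\<in>annM. 1 - a * uinv (a * uinv (1 - s)) = s"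
    proof
      fix s :: 'a assume s: "s \<in> annM"
      have sM: "- s \<in> M" using ideal_neg[OF M_ideal] s annM_sub_M[OF M0] by blast
      have u1: "1 - s \<in> U" using one_plus_M[OF sM] by simp
      have "uinv (a * uinv (1 - s)) = uinv a * (1 - s)"
        using uinv_mult_distrib[OF a uinv_runits[OF u1]] uinv_uinv[OF u1] by simp
      then have "a * uinv (a * uinv (1 - s)) = 1 - s" using uinv_mult[OF a] by (simp add: mult.assoc[symmetric])
      then show "1 - a * uinv (a * uinv (1 - s)) = s" by simp
    qed
    show "(\<lambda>z. 1 - a * uinv z) ` Z \<subseteq> annM" unfolding Z_def by auto
    show "(\<lambda>s. a * uinv (1 - s)) ` annM \<subseteq> Z"
    proof
      fix w assume "w \<in> (\<lambda>s. a * uinv (1 - s)) ` annM"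
      then obtain s :: 'a where s: "s \<in> annM" and w: "w = a * uinv (1 - s)" by blast
      have sM: "- s \<in> M" using ideal_neg[OF M_ideal] s annM_sub_M[OF M0] by blast
      have u1: "1 - s \<in> U" using one_plus_M[OF sM] by simp
      have wu: "w \<in> U" unfolding w using runits_mult[OF a uinv_runits[OF u1]] .
      have "uinv w = uinv a * (1 - s)"
        unfolding w using uinv_mult_distrib[OF a uinv_runits[OF u1]] uinv_uinv[OF u1] by simp
      then have "1 - a * uinv w = s" using uinv_mult[OF a] by (simp add: mult.assoc[symmetric])
      then show "w \<in> Z" unfolding Z_def using wu s by simp
    qed
  qed
  also have "of_nat (card (annM::'a set)) * ((1 + quad_char a) * \<tau> (-1) * \<tau> a * of_nat (card M)) =
      (1 + quad_char a) * \<tau> (-1) * \<tau> a * of_nat (card (annM::'a set) * card M)" by simp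
  also have "card (annM::'a set) * card M = card (UNIV::'a set)" by (rule card_annM_M)
  finally show ?thesis by (simp add: ac_simps)
qed

end



lemma sum_char_cases:
  assumes "mult_char f"
  shows "(\<Sum>u\<in>(runits::'a::{comm_ring_1,finite} set). f u) =
    (if \<forall>u\<in>runits. f u = 1 then of_nat (card (runits::'a set)) else 0)"
  using sum_char_nontriv[OF assms] by auto

context frob
begin

lemma part2:
  fixes \<chi> \<tau> :: "'a \<Rightarrow> complex"
  assumes M0: "M \<noteq> {0}" and two: "(2::'a) \<in> U"
    and chi: "mult_char \<chi>" and chinp: "\<not> primitive_mult_char \<chi>"
    and tau: "mult_char \<tau>" and taunp: "\<not> primitive_mult_char \<tau>"
  shows "(\<Sum>a\<in>runits. \<chi> a * (kloosterman \<psi> \<tau> a)\<^sup>2) =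
    (if \<chi> = (\<lambda>u. cnj (\<tau> u)) \<or> \<chi> = (\<lambda>u. quad_char u * cnj (\<tau> u))
     then \<tau> (-1) * of_nat (card (runits :: 'a set)) * of_nat (card (UNIV :: 'a set)) else 0)"
proof -
  have hchi: "\<forall>v\<in>annM. \<chi> (1 + v) = 1" using L_nonprim[OF chi chinp] M0 by blast
  have htau: "\<forall>v\<in>annM. \<tau> (1 + v) = 1" using L_nonprim[OF tau taunp] M0 by blast
  define N where "N = (of_nat (card (UNIV :: 'a set)) :: complex)"
  define \<gamma> where "\<gamma> = (\<lambda>u. \<chi> u * \<tau> u)"
  define \<delta> where "\<delta> = (\<lambda>u. \<chi> u * \<tau> u * quad_char u)"
  have qm: "mult_char (quad_char :: 'a \<Rightarrow> complex)" using quad_mult_char[OF two] .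
  have gm: "mult_char \<gamma>" unfolding \<gamma>_def using mult_char_prod[OF chi tau] .
  have dm: "mult_char \<delta>" unfolding \<delta>_def using mult_char_prod[OF mult_char_prod[OF chi tau] qm] .
  have "(\<Sum>a\<in>runits. \<chi> a * (kloosterman \<psi> \<tau> a)\<^sup>2) = (\<Sum>a\<in>U. \<chi> a * F0 \<psi> \<tau> a)"
    by (rule stepA[OF chi hchi M0])
  also have "\<dots> = (\<Sum>a\<in>U. \<tau> (-1) * N * (\<gamma> a + \<delta> a))"
  proof (rule sum.cong[OF refl])
    fix a :: 'a assume a: "a \<in> U"
    show "\<chi> a * F0 \<psi> \<tau> a = \<tau> (-1) * N * (\<gamma> a + \<delta> a)"
      unfolding stepB[OF tau htau M0 two a] N_def \<gamma>_def \<delta>_def by (simp add: algebra_simps)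
  qed
  also have "\<dots> = \<tau> (-1) * N * ((\<Sum>a\<in>U. \<gamma> a) + (\<Sum>a\<in>U. \<delta> a))"
    by (simp only: sum.distrib flip: sum_distrib_left)
  finally have S: "(\<Sum>a\<in>runits. \<chi> a * (kloosterman \<psi> \<tau> a)\<^sup>2) =
      \<tau> (-1) * N * ((\<Sum>a\<in>U. \<gamma> a) + (\<Sum>a\<in>U. \<delta> a))" .
  have cn: "\<And>u. u \<in> U \<Longrightarrow> \<tau> u * cnj (\<tau> u) = 1" using mult_char_cnj[OF tau] by blast
  have g_iff: "(\<forall>u\<in>U. \<gamma> u = 1) \<longleftrightarrow> \<chi> = (\<lambda>u. cnj (\<tau> u))"
  proof
    assume h: "\<forall>u\<in>U. \<gamma> u = 1"
    show "\<chi> = (\<lambda>u. cnj (\<tau> u))"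
    proof
      fix x :: 'a
      show "\<chi> x = cnj (\<tau> x)"
      proof (cases "x \<in> U")
        case True
        have "\<chi> x = \<chi> x * (\<tau> x * cnj (\<tau> x))" using cn[OF True] by simp
        also have "\<dots> = \<gamma> x * cnj (\<tau> x)" unfolding \<gamma>_def by (simp add: ac_simps)
        finally show ?thesis using h True by simp
      next
        case False
        then show ?thesis using mult_char_zero[OF chi] mult_char_zero[OF tau] by simp
      qed
    qed
  next
    assume "\<chi> = (\<lambda>u. cnj (\<tau> u))"
    then show "\<forall>u\<in>U. \<gamma> u = 1" unfolding \<gamma>_def using cn by (simp add: mult.commute)
  qed
  have d_iff: "(\<forall>u\<in>U. \<delta> u = 1) \<longleftrightarrow> \<chi> = (\<lambda>u. quad_char u * cnj (\<tau> u))"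
  proof
    assume h: "\<forall>u\<in>U. \<delta> u = 1"
    show "\<chi> = (\<lambda>u. quad_char u * cnj (\<tau> u))"
    proof
      fix x :: 'a
      show "\<chi> x = quad_char x * cnj (\<tau> x)"
      proof (cases "x \<in> U")
        case True
        have "\<chi> x = \<chi> x * (\<tau> x * cnj (\<tau> x)) * (quad_char x * quad_char x)"
          using cn[OF True] quad_sq[OF two True] by simp
        also have "\<dots> = \<delta> x * (quad_char x * cnj (\<tau> x))" unfolding \<delta>_def by (simp add: ac_simps)
        finally show ?thesis using h True by simp
      next
        case False
        then show ?thesis using mult_char_zero[OF chi] mult_char_zero[OF tau] by simp
      qed
    qed
  next
    assume e: "\<chi> = (\<lambda>u. quad_char u * cnj (\<tau> u))"
    show "\<forall>u\<in>U. \<delta> u = 1"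
    proof
      fix u :: 'a assume u: "u \<in> U"
      have "\<delta> u = (\<tau> u * cnj (\<tau> u)) * (quad_char u * quad_char u)" unfolding \<delta>_def e by (simp add: ac_simps)
      then show "\<delta> u = 1" using cn[OF u] quad_sq[OF two u] by simp
    qed
  qed
  obtain u0 where u0: "u0 \<in> U" "(quad_char u0 :: complex) \<noteq> 1" using quad_nontriv[OF two] by blast
  have sq0: "(\<Sum>a\<in>U. (quad_char a :: complex)) = 0" using sum_char_nontriv[OF qm u0] .
  show ?thesis
  proof (cases "\<chi> = (\<lambda>u. cnj (\<tau> u))")
    case True
    then have g1: "\<forall>u\<in>U. \<gamma> u = 1" using g_iff by blast
    have "\<forall>u\<in>U. \<delta> u = quad_char u" using g1 unfolding \<gamma>_def \<delta>_def by simp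
    then have "(\<Sum>a\<in>U. \<delta> a) = 0" using sq0 by simp
    moreover have "(\<Sum>a\<in>U. \<gamma> a) = of_nat (card U)" using g1 by simp
    ultimately show ?thesis unfolding S using True N_def by (simp add: ac_simps)
  next
    case F1: False
    show ?thesis
    proof (cases "\<chi> = (\<lambda>u. quad_char u * cnj (\<tau> u))")
      case True
      then have d1: "\<forall>u\<in>U. \<delta> u = 1" using d_iff by blast
      have "\<forall>u\<in>U. \<gamma> u = quad_char u"
      proof
        fix u :: 'a assume u: "u \<in> U"
        have "\<gamma> u = \<delta> u * quad_char u" unfolding \<gamma>_def \<delta>_def
          using quad_sq[OF two u] by (simp add: ac_simps)
        then show "\<gamma> u = quad_char u" using d1 u by simp
      qed
      then have "(\<Sum>a\<in>U. \<gamma> a) = 0" using sq0 by simp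
      moreover have "(\<Sum>a\<in>U. \<delta> a) = of_nat (card U)" using d1 by simp
      ultimately show ?thesis unfolding S using True N_def by (simp add: ac_simps)
    next
      case F2: False
      have "(\<Sum>a\<in>U. \<gamma> a) = 0" using sum_char_cases[OF gm] g_iff F1 by simp
      moreover have "(\<Sum>a\<in>U. \<delta> a) = 0" using sum_char_cases[OF dm] d_iff F2 by simp
      ultimately show ?thesis unfolding S using F1 F2 by simp
    qed
  qed
qed

end

theorem mainTheorem11:
  fixes \<psi> \<tau> :: "'a::{comm_ring_1, finite} \<Rightarrow> complex"
  assumes loc: "local_ring TYPE('a)"
    and psi: "primitive_additive_char \<psi>"
    and tau: "mult_char \<tau>" and tau_np: "\<not> primitive_mult_char \<tau>"
  shows "(\<forall>\<chi>. mult_char \<chi> \<and> primitive_mult_char \<chi> \<longrightarrow>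
            (\<Sum>a\<in>runits. \<chi> a * (kloosterman \<psi> \<tau> a)\<^sup>2) =
              jacobi_sum \<chi> (\<lambda>u. \<chi> u * (\<tau> u)\<^sup>2) * (gauss_sum \<psi> (\<lambda>u. \<chi> u * \<tau> u))\<^sup>2)
       \<and> (\<not> is_field_ring TYPE('a) \<and> odd (residue_char TYPE('a)) \<longrightarrow>
          (\<forall>\<chi>. mult_char \<chi> \<and> \<not> primitive_mult_char \<chi> \<longrightarrow>
            (\<Sum>a\<in>runits. \<chi> a * (kloosterman \<psi> \<tau> a)\<^sup>2) =
              (if \<chi> = (\<lambda>u. cnj (\<tau> u)) \<or> \<chi> = (\<lambda>u. quad_char u * cnj (\<tau> u))
               then \<tau> (-1) * of_nat (card (runits :: 'a set)) * of_nat (card (UNIV :: 'a set))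
               else 0)))"
proof -
  interpret frob "TYPE('a)" \<psi>
    by (unfold_locales) (rule loc, rule psi)
  show ?thesis
  proof (intro conjI allI impI)
    fix \<chi> :: "'a \<Rightarrow> complex"
    assume "mult_char \<chi> \<and> primitive_mult_char \<chi>"
    then show "(\<Sum>a\<in>runits. \<chi> a * (kloosterman \<psi> \<tau> a)\<^sup>2) =
        jacobi_sum \<chi> (\<lambda>u. \<chi> u * (\<tau> u)\<^sup>2) * (gauss_sum \<psi> (\<lambda>u. \<chi> u * \<tau> u))\<^sup>2"
      using part1[OF _ _ tau tau_np] by blast
  next
    fix \<chi> :: "'a \<Rightarrow> complex"
    assume h: "\<not> is_field_ring TYPE('a) \<and> odd (residue_char TYPE('a))"
      and c: "mult_char \<chi> \<and> \<not> primitive_mult_char \<chi>"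
    have M0: "M \<noteq> {0}"
    proof -
      obtain x :: 'a where "x \<noteq> 0" "\<not> x dvd 1" using h unfolding is_field_ring_def by blast
      then have "x \<in> M" using nonunit_in_M unfolding runits_def by blast
      then show ?thesis using \<open>x \<noteq> 0\<close> by blast
    qed
    have two: "(2::'a) \<in> U"
    proof (rule ccontr)
      assume "(2::'a) \<notin> U"
      then have 2: "(of_nat 2 :: 'a) \<in> M" using nonunit_in_M by simp
      have "residue_char TYPE('a) = 2"
        unfolding residue_char_def
      proof (rule Least_equality)
        show "0 < (2::nat) \<and> (of_nat 2 :: 'a) \<in> M" using 2 by simp
        fix n :: nat assume n: "0 < n \<and> (of_nat n :: 'a) \<in> M"
        show "2 \<le> n"
        proof (rule ccontr)
          assume "\<not> 2 \<le> n"
          then have "n = 1" using n by simp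
          then show False using n one_notin_M by simp
        qed
      qed
      then show False using h by simp
    qed
    show "(\<Sum>a\<in>runits. \<chi> a * (kloosterman \<psi> \<tau> a)\<^sup>2) =
        (if \<chi> = (\<lambda>u. cnj (\<tau> u)) \<or> \<chi> = (\<lambda>u. quad_char u * cnj (\<tau> u))
         then \<tau> (-1) * of_nat (card (runits :: 'a set)) * of_nat (card (UNIV :: 'a set)) else 0)"
      using part2[OF M0 two _ _ tau tau_np] c by blast
  qed
qed



end
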